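(* Let $N$ be an odd positive integer and $r\ge s\ge2$. The transfer homomorphism $V:(\Phi_r^s)^{\mathrm{ab}}\to\Gamma_1(N2^r)^{\mathrm{ab}}$ associated to the finite-index subgroup $\Gamma_1(N2^r)\subseteq\Phi_r^s$ commutes with the action of the Atkin operator $U$ on its source and target.
   Context: For $M\ge1$, $\Gamma_1(M)=\{\begin{pmatrix}a&b\\c&d\end{pmatrix}\in\mathrm{SL}_2(\mathbb{Z}) : c\equiv0,\ a\equiv d\equiv1 \pmod M\}$, $\Gamma_0(M)=\{c\equiv 0\pmod M\}$, $\Gamma^0(2)=\{b\equiv0\pmod 2\}$ (inside $\mathrm{SL}_2(\mathbb{Z})$). For $r\ge s\ge2$, $\Phi_r^s:=\Gamma_1(N2^s)\cap\Gamma_0(2^r)$, so $\Phi_r^r=\Gamma_1(N2^r)$; $G^{\mathrm{ab}}$ denotes abelianization. With $t=\begin{pmatrix}1&0\\0&2\end{pmatrix}$, the Atkin operator $U$ on $(\Phi_r^s)^{\mathrm{ab}}$ (for any $r\ge s\ge 2$) is the composite of the transfer $(\Phi_r^s)^{\mathrm{ab}}\to(\Phi_r^s\cap\Gamma^0(2))^{\mathrm{ab}}$, the map induced by the isomorphism $x\mapsto txt^{-1}$ from $\Phi_r^s\cap\Gamma^0(2)$ onto $\Phi_{r+1}^s$, and the inclusion-induced map $(\Phi_{r+1}^s)^{\mathrm{ab}}\to(\Phi_r^s)^{\mathrm{ab}}$. *)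

theory Defs
  imports "HOL-Algebra.Algebra" "HOL-Number_Theory.Cong"
begin

datatype m2 = M2 int int int int

fun m2_mult :: "m2 \<Rightarrow> m2 \<Rightarrow> m2" where
  "m2_mult (M2 p q u v) (M2 p2 q2 u2 v2) =
     M2 (p*p2 + q*u2) (p*q2 + q*v2) (u*p2 + v*u2) (u*q2 + v*v2)"

fun m2_det :: "m2 \<Rightarrow> int" where
  "m2_det (M2 p q u v) = p*v - q*u"

definition SL2Z :: "m2 monoid" where
  "SL2Z = \<lparr>carrier = {A. m2_det A = 1}, monoid.mult = m2_mult, one = M2 1 0 0 1\<rparr>"

definition Gamma1 :: "nat \<Rightarrow> m2 set" where
  "Gamma1 M = {M2 p q u v | p q u v. p*v - q*u = 1 \<and>
      [u = 0] (mod int M) \<and> [p = 1] (mod int M) \<and> [v = 1] (mod int M)}"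

definition Gamma0 :: "nat \<Rightarrow> m2 set" where
  "Gamma0 M = {M2 p q u v | p q u v. p*v - q*u = 1 \<and> [u = 0] (mod int M)}"

definition Gamma_up0_2 :: "m2 set" where
  "Gamma_up0_2 = {M2 p q u v | p q u v. p*v - q*u = 1 \<and> [q = 0] (mod 2)}"

definition Phi :: "nat \<Rightarrow> nat \<Rightarrow> nat \<Rightarrow> m2 set" where
  "Phi N r s = Gamma1 (N * 2^s) \<inter> Gamma0 (2^r)"

definition ab :: "m2 set \<Rightarrow> m2 set monoid" where
  "ab H = (SL2Z\<lparr>carrier := H\<rparr>) Mod (derived SL2Z H)"

definition right_transversal :: "m2 set \<Rightarrow> m2 set \<Rightarrow> m2 set \<Rightarrow> bool" where
  "right_transversal H K T \<longleftrightarrow> T \<subseteq> H \<and> (\<forall>h\<in>H. \<exists>!t. t \<in> T \<and> h \<in> r_coset SL2Z K t)"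

definition transfer :: "m2 set \<Rightarrow> m2 set \<Rightarrow> m2 set \<Rightarrow> m2 set" where
  "transfer H K Cl =
    (let h = (SOME h. h \<in> Cl);
         T = (SOME T. right_transversal H K T);
         nxt = (\<lambda>t. THE w. w \<in> T \<and> m2_mult t h \<in> r_coset SL2Z K w)
     in finprod (ab K)
          (\<lambda>t. r_coset SL2Z (derived SL2Z K)
                 (m2_mult (m2_mult t h) (m_inv SL2Z (nxt t)))) T)"

text \<open>Conjugation x \<mapsto> t x t^{-1} with t = diag(1,2).\<close>
fun conj_t :: "m2 \<Rightarrow> m2" where
  "conj_t (M2 p q u v) = M2 p (q div 2) (2*u) v"

text \<open>Map G'^ab -> G^ab induced by an inclusion G' \<subseteq> G.\<close>
definition ab_incl :: "m2 set \<Rightarrow> m2 set \<Rightarrow> m2 set" where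
  "ab_incl G Cl = set_mult SL2Z (derived SL2Z G) Cl"

definition atkin :: "nat \<Rightarrow> nat \<Rightarrow> nat \<Rightarrow> m2 set \<Rightarrow> m2 set" where
  "atkin N r s Cl =
     ab_incl (Phi N r s) (conj_t ` transfer (Phi N r s) (Phi N r s \<inter> Gamma_up0_2) Cl)"

end

theory Submission
  imports Defs
begin


definition abG :: "('a,'b) monoid_scheme \<Rightarrow> 'a set \<Rightarrow> 'a set monoid" where
  "abG G K = (G\<lparr>carrier := K\<rparr>) Mod derived G K"

definition rtv :: "('a,'b) monoid_scheme \<Rightarrow> 'a set \<Rightarrow> 'a set \<Rightarrow> 'a set \<Rightarrow> bool" where
  "rtv G H K T \<longleftrightarrow> T \<subseteq> H \<and> (\<forall>h\<in>H. \<exists>!t. t \<in> T \<and> h \<in> K #>\<^bsub>G\<^esub> t)"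

definition nx :: "('a,'b) monoid_scheme \<Rightarrow> 'a set \<Rightarrow> 'a set \<Rightarrow> 'a \<Rightarrow> 'a \<Rightarrow> 'a" where
  "nx G T K h t = (THE w. w \<in> T \<and> t \<otimes>\<^bsub>G\<^esub> h \<in> K #>\<^bsub>G\<^esub> w)"

definition phi :: "('a,'b) monoid_scheme \<Rightarrow> 'a set \<Rightarrow> 'a set \<Rightarrow> 'a \<Rightarrow> 'a set" where
  "phi G T K h = finprod (abG G K)
     (\<lambda>t. derived G K #>\<^bsub>G\<^esub> (t \<otimes>\<^bsub>G\<^esub> h \<otimes>\<^bsub>G\<^esub> inv\<^bsub>G\<^esub> (nx G T K h t))) T"

definition Tr :: "('a,'b) monoid_scheme \<Rightarrow> 'a set \<Rightarrow> 'a set \<Rightarrow> 'a \<Rightarrow> 'a set" where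
  "Tr G H K h = phi G (SOME T. rtv G H K T) K h"

definition TrC :: "('a,'b) monoid_scheme \<Rightarrow> 'a set \<Rightarrow> 'a set \<Rightarrow> 'a set \<Rightarrow> 'a set" where
  "TrC G H K Cl = Tr G H K (SOME h. h \<in> Cl)"

definition fidx :: "('a,'b) monoid_scheme \<Rightarrow> 'a set \<Rightarrow> 'a set \<Rightarrow> bool" where
  "fidx G H K \<longleftrightarrow> finite ((\<lambda>h. K #>\<^bsub>G\<^esub> h) ` H)"

lemma comm4: assumes "comm_group A" "a \<in> carrier A" "b \<in> carrier A"
  shows "a \<otimes>\<^bsub>A\<^esub> b \<otimes>\<^bsub>A\<^esub> inv\<^bsub>A\<^esub> a \<otimes>\<^bsub>A\<^esub> inv\<^bsub>A\<^esub> b = \<one>\<^bsub>A\<^esub>"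
proof -
  interpret comm_group A by fact
  have "a \<otimes>\<^bsub>A\<^esub> b \<otimes>\<^bsub>A\<^esub> inv\<^bsub>A\<^esub> a \<otimes>\<^bsub>A\<^esub> inv\<^bsub>A\<^esub> b = (a \<otimes>\<^bsub>A\<^esub> b) \<otimes>\<^bsub>A\<^esub> (inv\<^bsub>A\<^esub> a \<otimes>\<^bsub>A\<^esub> inv\<^bsub>A\<^esub> b)"
    using assms(2,3) by (simp add: m_assoc)
  also have "inv\<^bsub>A\<^esub> a \<otimes>\<^bsub>A\<^esub> inv\<^bsub>A\<^esub> b = inv\<^bsub>A\<^esub> (a \<otimes>\<^bsub>A\<^esub> b)" using assms(2,3) by (simp add: inv_mult)
  finally show ?thesis using assms(2,3) by simp
qed

lemma r_coset_restrict: "r_coset (G\<lparr>carrier := K\<rparr>) = r_coset G"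
  by (intro ext) (simp add: r_coset_def)

lemma set_mult_restrict: "set_mult (G\<lparr>carrier := K\<rparr>) = set_mult G"
  by (intro ext) (simp add: set_mult_def)

context group begin

lemma ab_cg: "subgroup K G \<Longrightarrow> comm_group (abG G K)"
  unfolding abG_def by (rule derived_quot_of_subgroup_is_comm_group)

lemma ab_carrier: "subgroup K G \<Longrightarrow> carrier (abG G K) = (\<lambda>x. derived G K #> x) ` K"
  unfolding abG_def FactGroup_def RCOSETS_def by (auto simp: r_coset_restrict)

lemma ab_in: "subgroup K G \<Longrightarrow> x \<in> K \<Longrightarrow> derived G K #> x \<in> carrier (abG G K)"
  using ab_carrier by auto

lemma D_sub: "subgroup K G \<Longrightarrow> subgroup (derived G K) G"
  by (rule derived_is_subgroup) (rule subgroup.subset)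

lemma D_in: "subgroup K G \<Longrightarrow> derived G K \<subseteq> K"
  by (rule derived_incl) auto

lemma ab_mult: assumes K: "subgroup K G" and x: "x \<in> K" and y: "y \<in> K"
  shows "(derived G K #> x) \<otimes>\<^bsub>abG G K\<^esub> (derived G K #> y) = derived G K #> (x \<otimes> y)"
proof -
  interpret N: normal "derived G K" "G\<lparr>carrier := K\<rparr>"
    by (rule derived_subgroup_is_normal[OF K])
  have "(derived G K #>\<^bsub>G\<lparr>carrier := K\<rparr>\<^esub> x) <#>\<^bsub>G\<lparr>carrier := K\<rparr>\<^esub> (derived G K #>\<^bsub>G\<lparr>carrier := K\<rparr>\<^esub> y)
     = derived G K #>\<^bsub>G\<lparr>carrier := K\<rparr>\<^esub> (x \<otimes>\<^bsub>G\<lparr>carrier := K\<rparr>\<^esub> y)"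
    by (rule N.rcos_sum) (use x y in auto)
  thus ?thesis unfolding abG_def FactGroup_def by (simp add: r_coset_restrict set_mult_restrict)
qed

lemma ab_one: assumes K: "subgroup K G"
  shows "\<one>\<^bsub>abG G K\<^esub> = derived G K #> \<one>"
proof -
  have "derived G K \<subseteq> carrier G" using D_sub[OF K] subgroup.subset by blast
  thus ?thesis unfolding abG_def FactGroup_def by simp
qed

lemma ab_eq: assumes K: "subgroup K G" and x: "x \<in> K" and y: "y \<in> K"
  shows "(derived G K #> x = derived G K #> y) \<longleftrightarrow> x \<otimes> inv y \<in> derived G K"
proof -
  interpret D: subgroup "derived G K" G by (rule D_sub[OF K])
  have xc: "x \<in> carrier G" and yc: "y \<in> carrier G" using x y subgroup.subset[OF K] by auto
  show ?thesis
  proof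
    assume e: "derived G K #> x = derived G K #> y"
    have "x \<in> derived G K #> y" using rcos_self[OF xc D.subgroup_axioms] e by simp
    thus "x \<otimes> inv y \<in> derived G K" using D.rcos_module_imp[OF is_group yc] by blast
  next
    assume "x \<otimes> inv y \<in> derived G K"
    hence "x \<in> derived G K #> y" using D.rcos_module_rev[OF is_group yc xc] by blast
    thus "derived G K #> x = derived G K #> y"
      using repr_independence[OF _ yc D.subgroup_axioms] by simp
  qed
qed

lemma ab_inv: assumes K: "subgroup K G" and x: "x \<in> K"
  shows "inv\<^bsub>abG G K\<^esub> (derived G K #> x) = derived G K #> inv x"
proof -
  interpret A: comm_group "abG G K" by (rule ab_cg[OF K])
  have ix: "inv x \<in> K" by (rule subgroup.m_inv_closed[OF K x])
  have xc: "x \<in> carrier G" using x subgroup.subset[OF K] by blast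
  have "(derived G K #> inv x) \<otimes>\<^bsub>abG G K\<^esub> (derived G K #> x) = derived G K #> (inv x \<otimes> x)"
    by (rule ab_mult[OF K ix x])
  also have "inv x \<otimes> x = \<one>" by (rule l_inv[OF xc])
  also have "derived G K #> \<one> = \<one>\<^bsub>abG G K\<^esub>" by (rule ab_one[OF K, symmetric])
  finally have e: "(derived G K #> inv x) \<otimes>\<^bsub>abG G K\<^esub> (derived G K #> x) = \<one>\<^bsub>abG G K\<^esub>" .
  show ?thesis by (rule A.inv_equality[OF e ab_in[OF K x] ab_in[OF K ix]])
qed

lemma mic1: "x \<in> carrier G \<Longrightarrow> a \<in> carrier G \<Longrightarrow> x \<otimes> (inv x \<otimes> a) = a"
  by (metis m_assoc inv_closed r_inv l_one)
lemma mic2: "x \<in> carrier G \<Longrightarrow> a \<in> carrier G \<Longrightarrow> inv x \<otimes> (x \<otimes> a) = a"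
  by (metis m_assoc inv_closed l_inv l_one)

lemma id5: "s \<in> carrier G \<Longrightarrow> t \<in> carrier G \<Longrightarrow> h \<in> carrier G \<Longrightarrow> a \<in> carrier G \<Longrightarrow> b \<in> carrier G \<Longrightarrow>
  s \<otimes> (t \<otimes> h \<otimes> inv b) \<otimes> inv a = (s \<otimes> t) \<otimes> h \<otimes> inv (a \<otimes> b)"
  by (simp add: m_assoc inv_mult_group)

lemma inv_cancel_right: "x \<in> carrier G \<Longrightarrow> y \<in> carrier G \<Longrightarrow> z \<in> carrier G \<Longrightarrow>
  (x \<otimes> z) \<otimes> inv (y \<otimes> z) = x \<otimes> inv y"
  by (simp add: inv_mult_group m_assoc mic1)

lemma rtv_sub: "rtv G H K T \<Longrightarrow> t \<in> T \<Longrightarrow> t \<in> H"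
  unfolding rtv_def by auto

lemma rtv_eq:
  assumes H: "subgroup H G" and K: "subgroup K G" and T: "rtv G H K T"
    and t1: "t1 \<in> T" and t2: "t2 \<in> T" and k: "t1 \<otimes> inv t2 \<in> K"
  shows "t1 = t2"
proof -
  have h1: "t1 \<in> H" "t2 \<in> H" using T t1 t2 rtv_sub by auto
  hence c: "t1 \<in> carrier G" "t2 \<in> carrier G" using subgroup.subset[OF H] by auto
  have a: "t1 \<in> K #> t1" by (rule rcos_self[OF c(1) K])
  have b: "t1 \<in> K #> t2" using subgroup.rcos_module_rev[OF K is_group c(2) c(1) k] .
  from T h1 have "\<exists>!t. t \<in> T \<and> t1 \<in> K #> t" unfolding rtv_def by auto
  thus ?thesis using a b t1 t2 by blast
qed

lemma nx_prop:
  assumes H: "subgroup H G" and T: "rtv G H K T" and h: "h \<in> H" and t: "t \<in> T"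
  shows "nx G T K h t \<in> T \<and> t \<otimes> h \<in> K #> nx G T K h t"
proof -
  have "t \<otimes> h \<in> H" using T t h rtv_sub subgroup.m_closed[OF H] by blast
  hence "\<exists>!w. w \<in> T \<and> t \<otimes> h \<in> K #> w" using T unfolding rtv_def by auto
  thus ?thesis unfolding nx_def by (rule theI')
qed

lemma nx_unique:
  assumes H: "subgroup H G" and T: "rtv G H K T" and h: "h \<in> H" and t: "t \<in> T"
    and w: "w \<in> T" and m: "t \<otimes> h \<in> K #> w"
  shows "nx G T K h t = w"
proof -
  have "t \<otimes> h \<in> H" using T t h rtv_sub subgroup.m_closed[OF H] by blast
  hence "\<exists>!w. w \<in> T \<and> t \<otimes> h \<in> K #> w" using T unfolding rtv_def by auto
  thus ?thesis unfolding nx_def using w m by blast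
qed

lemma nx_k:
  assumes H: "subgroup H G" and K: "subgroup K G" and T: "rtv G H K T" and h: "h \<in> H" and t: "t \<in> T"
  shows "t \<otimes> h \<otimes> inv (nx G T K h t) \<in> K"
proof -
  from nx_prop[OF H T h t] have n: "nx G T K h t \<in> T" "t \<otimes> h \<in> K #> nx G T K h t" by auto
  have "nx G T K h t \<in> carrier G" using n(1) T rtv_sub subgroup.subset[OF H] by blast
  thus ?thesis using subgroup.rcos_module_imp[OF K is_group _ n(2)] by blast
qed

lemma nx_inj:
  assumes H: "subgroup H G" and K: "subgroup K G" and T: "rtv G H K T" and h: "h \<in> H"
  shows "inj_on (nx G T K h) T"
proof
  fix t1 t2 assume t1: "t1 \<in> T" and t2: "t2 \<in> T" and e: "nx G T K h t1 = nx G T K h t2"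
  let ?w = "nx G T K h t2"
  have k1: "t1 \<otimes> h \<otimes> inv ?w \<in> K" using nx_k[OF H K T h t1] e by simp
  have k2: "t2 \<otimes> h \<otimes> inv ?w \<in> K" using nx_k[OF H K T h t2] .
  have c: "t1 \<in> carrier G" "t2 \<in> carrier G" "h \<in> carrier G" "?w \<in> carrier G"
    using t1 t2 h nx_prop[OF H T h t2] rtv_sub[OF T] subgroup.subset[OF H] by blast+
  have "(t1 \<otimes> h \<otimes> inv ?w) \<otimes> inv (t2 \<otimes> h \<otimes> inv ?w) \<in> K"
    using k1 k2 subgroup.m_closed[OF K] subgroup.m_inv_closed[OF K] by blast
  also have "(t1 \<otimes> h \<otimes> inv ?w) \<otimes> inv (t2 \<otimes> h \<otimes> inv ?w) = t1 \<otimes> inv t2"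
    using c by (simp add: inv_mult_group m_assoc mic1 mic2)
  finally show "t1 = t2" using rtv_eq[OF H K T t1 t2] by blast
qed

lemma nx_perm:
  assumes H: "subgroup H G" and K: "subgroup K G" and T: "rtv G H K T" and h: "h \<in> H"
    and f: "finite T"
  shows "nx G T K h ` T = T"
  using endo_inj_surj[OF f _ nx_inj[OF H K T h]] nx_prop[OF H T h] by blast

lemma rtv_finite:
  assumes H: "subgroup H G" and K: "subgroup K G" and T: "rtv G H K T" and fi: "fidx G H K"
  shows "finite T"
proof -
  have "inj_on (\<lambda>t. K #> t) T"
  proof
    fix t1 t2 assume t1: "t1 \<in> T" and t2: "t2 \<in> T" and e: "K #> t1 = K #> t2"
    have c: "t1 \<in> carrier G" "t2 \<in> carrier G" using t1 t2 T rtv_sub subgroup.subset[OF H] by blast+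
    have "t1 \<in> K #> t2" using rcos_self[OF c(1) K] e by simp
    hence "t1 \<otimes> inv t2 \<in> K" using subgroup.rcos_module_imp[OF K is_group c(2)] by blast
    thus "t1 = t2" using rtv_eq[OF H K T t1 t2] by blast
  qed
  moreover have "(\<lambda>t. K #> t) ` T \<subseteq> (\<lambda>h. K #> h) ` H" using T rtv_sub by blast
  hence "finite ((\<lambda>t. K #> t) ` T)" using fi unfolding fidx_def by (rule finite_subset)
  ultimately show ?thesis using finite_imageD by blast
qed

lemma rtv_exists:
  assumes H: "subgroup H G" and K: "subgroup K G"
  shows "\<exists>T. rtv G H K T"
proof -
  define rep where "rep C = (SOME t. t \<in> H \<and> C = K #> t)" for C
  have rep: "rep (K #> h) \<in> H \<and> K #> h = K #> rep (K #> h)" if "h \<in> H" for h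
    unfolding rep_def by (rule someI[of _ h]) (use that in simp)
  define T where "T = rep ` ((\<lambda>h. K #> h) ` H)"
  have TH: "T \<subseteq> H"
  proof
    fix t assume "t \<in> T"
    then obtain h where "h \<in> H" "t = rep (K #> h)" unfolding T_def by blast
    thus "t \<in> H" using rep[of h] by (simp only: conj_imp_eq_imp_imp)
  qed
  have U: "\<exists>!t. t \<in> T \<and> h \<in> K #> t" if h: "h \<in> H" for h
  proof (rule ex1I)
    have hc: "h \<in> carrier G" using h subgroup.subset[OF H] by blast
    show "rep (K #> h) \<in> T \<and> h \<in> K #> rep (K #> h)"
    proof
      show "rep (K #> h) \<in> T" unfolding T_def using h by blast
      have m: "h \<in> K #> h" by (rule rcos_self[OF hc K])
      have e: "K #> h = K #> rep (K #> h)" using rep[OF h] by (rule conjunct2)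
      show "h \<in> K #> rep (K #> h)" by (subst e[symmetric]) (rule m)
    qed
    fix t assume "t \<in> T \<and> h \<in> K #> t"
    hence t: "t \<in> T" and ht: "h \<in> K #> t" by auto
    obtain h' where h': "h' \<in> H" "t = rep (K #> h')" using t unfolding T_def by blast
    have tc: "t \<in> carrier G" using t TH subgroup.subset[OF H] by blast
    have e1: "K #> t = K #> h" using repr_independence[OF ht tc K] .
    have e2: "K #> h' = K #> t" using conjunct2[OF rep[OF h'(1)]] unfolding h'(2)[symmetric] .
    have e3: "K #> h' = K #> h" by (rule trans[OF e2 e1])
    show "t = rep (K #> h)" unfolding h'(2) e3 by (rule refl)
  qed
  have "rtv G H K T" unfolding rtv_def using TH U by blast
  thus ?thesis by blast
qed



end

locale trp = group G for G :: "('a,'b) monoid_scheme" (structure) +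
  fixes H K
  assumes H: "subgroup H G" and K: "subgroup K G" and KH: "K \<subseteq> H"
begin

abbreviation "D \<equiv> derived G K"
abbreviation "A \<equiv> abG G K"

lemma Hc: "x \<in> H \<Longrightarrow> x \<in> carrier G" using subgroup.subset[OF H] by blast
lemma Kc: "x \<in> K \<Longrightarrow> x \<in> carrier G" using subgroup.subset[OF K] by blast
lemma Tc: "rtv G H K T \<Longrightarrow> t \<in> T \<Longrightarrow> t \<in> carrier G" using rtv_sub Hc by blast

lemma A_cg: "comm_group A" by (rule ab_cg[OF K])

lemma nxT: "rtv G H K T \<Longrightarrow> h \<in> H \<Longrightarrow> t \<in> T \<Longrightarrow> nx G T K h t \<in> T"
  using nx_prop[OF H] by blast

lemma kT: "rtv G H K T \<Longrightarrow> h \<in> H \<Longrightarrow> t \<in> T \<Longrightarrow> t \<otimes> h \<otimes> inv (nx G T K h t) \<in> K"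
  by (rule nx_k[OF H K])

lemma phi_Pi: "rtv G H K T \<Longrightarrow> h \<in> H \<Longrightarrow>
   (\<lambda>t. D #> (t \<otimes> h \<otimes> inv (nx G T K h t))) \<in> T \<rightarrow> carrier A"
  using ab_in[OF K] kT by blast

lemma phi_closed: "rtv G H K T \<Longrightarrow> h \<in> H \<Longrightarrow> phi G T K h \<in> carrier A"
  unfolding phi_def using comm_monoid.finprod_closed[OF comm_group.axioms(1)[OF A_cg] phi_Pi] by blast

lemma phi_one: assumes T: "rtv G H K T" shows "phi G T K \<one> = \<one>\<^bsub>A\<^esub>"
proof -
  have o: "\<one> \<in> H" using subgroup.one_closed[OF H] .
  have "D #> (t \<otimes> \<one> \<otimes> inv (nx G T K \<one> t)) = \<one>\<^bsub>A\<^esub>" if t: "t \<in> T" for t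
  proof -
    have tc: "t \<in> carrier G" using Tc[OF T t] .
    have "nx G T K \<one> t = t"
      by (rule nx_unique[OF H T o t t]) (simp add: tc rcos_self[OF tc K])
    thus ?thesis using tc ab_one[OF K] by simp
  qed
  thus ?thesis unfolding phi_def by (rule comm_monoid.finprod_one_eqI[OF comm_group.axioms(1)[OF A_cg]])
qed

lemma nx_mult:
  assumes T: "rtv G H K T" and h1: "h1 \<in> H" and h2: "h2 \<in> H" and t: "t \<in> T"
  shows "nx G T K (h1 \<otimes> h2) t = nx G T K h2 (nx G T K h1 t)"
proof -
  let ?n = "nx G T K h1 t"
  let ?w = "nx G T K h2 ?n"
  have n: "?n \<in> T" using nxT[OF T h1 t] .
  have w: "?w \<in> T" using nxT[OF T h2 n] .
  have k1: "t \<otimes> h1 \<otimes> inv ?n \<in> K" using kT[OF T h1 t] .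
  have k2: "?n \<otimes> h2 \<otimes> inv ?w \<in> K" using kT[OF T h2 n] .
  have c: "t \<in> carrier G" "?n \<in> carrier G" "?w \<in> carrier G" "h1 \<in> carrier G" "h2 \<in> carrier G"
    using Tc[OF T] t n w Hc h1 h2 by auto
  have "(t \<otimes> h1 \<otimes> inv ?n) \<otimes> (?n \<otimes> h2 \<otimes> inv ?w) \<in> K"
    by (rule subgroup.m_closed[OF K k1 k2])
  also have "(t \<otimes> h1 \<otimes> inv ?n) \<otimes> (?n \<otimes> h2 \<otimes> inv ?w) = t \<otimes> (h1 \<otimes> h2) \<otimes> inv ?w"
    using c by (simp add: m_assoc mic2)
  finally have "t \<otimes> (h1 \<otimes> h2) \<in> K #> ?w"
    using subgroup.rcos_module_rev[OF K is_group c(3)] c by simp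
  thus ?thesis using nx_unique[OF H T _ t w] h1 h2 subgroup.m_closed[OF H] by blast
qed

lemma phi_mult:
  assumes T: "rtv G H K T" and f: "finite T" and h1: "h1 \<in> H" and h2: "h2 \<in> H"
  shows "phi G T K (h1 \<otimes> h2) = phi G T K h1 \<otimes>\<^bsub>A\<^esub> phi G T K h2"
proof -
  interpret A: comm_group A by (rule A_cg)
  let ?n = "nx G T K h1"
  define f1 where "f1 t = D #> (t \<otimes> h1 \<otimes> inv (nx G T K h1 t))" for t
  define f2 where "f2 t = D #> (t \<otimes> h2 \<otimes> inv (nx G T K h2 t))" for t
  have P1: "f1 \<in> T \<rightarrow> carrier A" unfolding f1_def by (rule phi_Pi[OF T h1])
  have P2: "f2 \<in> T \<rightarrow> carrier A" unfolding f2_def by (rule phi_Pi[OF T h2])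
  have h12: "h1 \<otimes> h2 \<in> H" by (rule subgroup.m_closed[OF H h1 h2])
  have eq: "D #> (t \<otimes> (h1 \<otimes> h2) \<otimes> inv (nx G T K (h1 \<otimes> h2) t)) = f1 t \<otimes>\<^bsub>A\<^esub> f2 (?n t)"
    if t: "t \<in> T" for t
  proof -
    let ?w = "nx G T K h2 (?n t)"
    have n: "?n t \<in> T" using nxT[OF T h1 t] .
    have w: "?w \<in> T" using nxT[OF T h2 n] .
    have c: "t \<in> carrier G" "?n t \<in> carrier G" "?w \<in> carrier G" "h1 \<in> carrier G" "h2 \<in> carrier G"
      using Tc[OF T] t n w Hc h1 h2 by auto
    have "f1 t \<otimes>\<^bsub>A\<^esub> f2 (?n t) = D #> ((t \<otimes> h1 \<otimes> inv (?n t)) \<otimes> (?n t \<otimes> h2 \<otimes> inv ?w))"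
      unfolding f1_def f2_def by (rule ab_mult[OF K kT[OF T h1 t] kT[OF T h2 n]])
    also have "(t \<otimes> h1 \<otimes> inv (?n t)) \<otimes> (?n t \<otimes> h2 \<otimes> inv ?w) = t \<otimes> (h1 \<otimes> h2) \<otimes> inv ?w"
      using c by (simp add: m_assoc mic2)
    finally show ?thesis using nx_mult[OF T h1 h2 t] by simp
  qed
  have "phi G T K (h1 \<otimes> h2) = finprod A (\<lambda>t. f1 t \<otimes>\<^bsub>A\<^esub> f2 (?n t)) T"
    unfolding phi_def by (rule A.finprod_cong') (use eq P1 P2 nxT[OF T h1] in \<open>auto intro!: A.m_closed\<close>)
  also have "\<dots> = finprod A f1 T \<otimes>\<^bsub>A\<^esub> finprod A (\<lambda>t. f2 (?n t)) T"
    by (rule A.finprod_multf) (use P1 P2 nxT[OF T h1] in auto)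
  also have "finprod A (\<lambda>t. f2 (?n t)) T = finprod A f2 (?n ` T)"
    by (rule A.finprod_reindex[symmetric]) (use P2 nx_perm[OF H K T h1 f] nx_inj[OF H K T h1] in auto)
  also have "?n ` T = T" by (rule nx_perm[OF H K T h1 f])
  finally show ?thesis unfolding phi_def f1_def f2_def .
qed

lemma phi_inv:
  assumes T: "rtv G H K T" and f: "finite T" and h: "h \<in> H"
  shows "phi G T K (inv h) = inv\<^bsub>A\<^esub> (phi G T K h)"
proof -
  interpret A: comm_group A by (rule A_cg)
  have ih: "inv h \<in> H" by (rule subgroup.m_inv_closed[OF H h])
  have "phi G T K (inv h) \<otimes>\<^bsub>A\<^esub> phi G T K h = phi G T K (inv h \<otimes> h)"
    by (rule phi_mult[OF T f ih h, symmetric])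
  also have "inv h \<otimes> h = \<one>" using Hc[OF h] by simp
  also have "phi G T K \<one> = \<one>\<^bsub>A\<^esub>" by (rule phi_one[OF T])
  finally show ?thesis using A.inv_equality phi_closed[OF T h] phi_closed[OF T ih] by blast
qed


lemma phi_indep:
  assumes T: "rtv G H K T" and f: "finite T" and T': "rtv G H K T'" and f': "finite T'"
    and h: "h \<in> H"
  shows "phi G T' K h = phi G T K h"
proof -
  interpret A: comm_group A by (rule A_cg)
  define \<sigma> where "\<sigma> t = (THE w. w \<in> T' \<and> t \<in> K #> w)" for t
  have s: "\<sigma> t \<in> T' \<and> t \<in> K #> \<sigma> t" if t: "t \<in> T" for t
  proof -
    have "\<exists>!w. w \<in> T' \<and> t \<in> K #> w" using T' rtv_sub[OF T t] unfolding rtv_def by blast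
    thus ?thesis unfolding \<sigma>_def by (rule theI')
  qed
  define a where "a t = t \<otimes> inv (\<sigma> t)" for t
  have aK: "a t \<in> K" if t: "t \<in> T" for t
    unfolding a_def using s[OF t] subgroup.rcos_module_imp[OF K is_group Tc[OF T' conjunct1[OF s[OF t]]]] by blast
  have sc: "\<sigma> t \<in> carrier G" if "t \<in> T" for t using Tc[OF T'] s that by blast
  have inj: "inj_on \<sigma> T"
  proof
    fix t1 t2 assume t1: "t1 \<in> T" and t2: "t2 \<in> T" and e: "\<sigma> t1 = \<sigma> t2"
    have "a t1 \<otimes> inv (a t2) \<in> K" using aK[OF t1] aK[OF t2] subgroup.m_closed[OF K] subgroup.m_inv_closed[OF K] by blast
    also have "a t1 \<otimes> inv (a t2) = t1 \<otimes> inv t2"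
      unfolding a_def e using Tc[OF T t1] Tc[OF T t2] sc[OF t2] by (simp add: inv_mult_group m_assoc mic1 mic2)
    finally show "t1 = t2" by (rule rtv_eq[OF H K T t1 t2])
  qed
  have img: "\<sigma> ` T = T'"
  proof
    show "\<sigma> ` T \<subseteq> T'" using s by blast
    show "T' \<subseteq> \<sigma> ` T"
    proof
      fix t' assume t': "t' \<in> T'"
      have t'H: "t' \<in> H" by (rule rtv_sub[OF T' t'])
      obtain t where t: "t \<in> T" "t' \<in> K #> t" using T t'H unfolding rtv_def by blast
      have k: "t' \<otimes> inv t \<in> K" using subgroup.rcos_module_imp[OF K is_group Tc[OF T t(1)] t(2)] .
      have "inv (t' \<otimes> inv t) \<in> K" by (rule subgroup.m_inv_closed[OF K k])
      also have "inv (t' \<otimes> inv t) = t \<otimes> inv t'" using Tc[OF T t(1)] Tc[OF T' t'] by (simp add: inv_mult_group)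
      finally have "t \<in> K #> t'" using subgroup.rcos_module_rev[OF K is_group Tc[OF T' t'] Tc[OF T t(1)]] by blast
      moreover have "\<exists>!w. w \<in> T' \<and> t \<in> K #> w" using T' rtv_sub[OF T t(1)] unfolding rtv_def by blast
      ultimately have "\<sigma> t = t'" using s[OF t(1)] t' by blast
      thus "t' \<in> \<sigma> ` T" using t(1) by blast
    qed
  qed
  let ?n = "nx G T K h"
  let ?n' = "nx G T' K h"
  have nn: "?n' (\<sigma> t) = \<sigma> (?n t)" if t: "t \<in> T" for t
  proof -
    have n: "?n t \<in> T" by (rule nxT[OF T h t])
    have c: "t \<in> carrier G" "?n t \<in> carrier G" "\<sigma> t \<in> carrier G" "\<sigma> (?n t) \<in> carrier G" "h \<in> carrier G"
      using Tc[OF T t] Tc[OF T n] sc[OF t] sc[OF n] Hc[OF h] by auto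
    have "inv (a t) \<otimes> (t \<otimes> h \<otimes> inv (?n t)) \<otimes> a (?n t) \<in> K"
      using aK[OF t] aK[OF n] kT[OF T h t] subgroup.m_closed[OF K] subgroup.m_inv_closed[OF K] by blast
    also have "inv (a t) \<otimes> (t \<otimes> h \<otimes> inv (?n t)) \<otimes> a (?n t) = \<sigma> t \<otimes> h \<otimes> inv (\<sigma> (?n t))"
      unfolding a_def using c by (simp add: inv_mult_group m_assoc mic1 mic2)
    finally have "\<sigma> t \<otimes> h \<in> K #> \<sigma> (?n t)"
      using subgroup.rcos_module_rev[OF K is_group c(4)] c by simp
    thus ?thesis by (rule nx_unique[OF H T' h conjunct1[OF s[OF t]] conjunct1[OF s[OF n]]])
  qed
  define g where "g t = D #> a t" for t
  define k where "k t = D #> (t \<otimes> h \<otimes> inv (?n t))" for t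
  have gP: "g \<in> T \<rightarrow> carrier A" unfolding g_def using ab_in[OF K] aK by blast
  have igP: "(\<lambda>t. inv\<^bsub>A\<^esub> g t) \<in> T \<rightarrow> carrier A" using gP by auto
  have kP: "k \<in> T \<rightarrow> carrier A" unfolding k_def by (rule phi_Pi[OF T h])
  have gnP: "(\<lambda>t. g (?n t)) \<in> T \<rightarrow> carrier A" using gP nxT[OF T h] by auto
  have trm: "D #> (\<sigma> t \<otimes> h \<otimes> inv (?n' (\<sigma> t))) = inv\<^bsub>A\<^esub> g t \<otimes>\<^bsub>A\<^esub> k t \<otimes>\<^bsub>A\<^esub> g (?n t)"
    if t: "t \<in> T" for t
  proof -
    have n: "?n t \<in> T" by (rule nxT[OF T h t])
    have c: "t \<in> carrier G" "?n t \<in> carrier G" "\<sigma> t \<in> carrier G" "\<sigma> (?n t) \<in> carrier G" "h \<in> carrier G"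
      using Tc[OF T t] Tc[OF T n] sc[OF t] sc[OF n] Hc[OF h] by auto
    have iaK: "inv (a t) \<in> K" by (rule subgroup.m_inv_closed[OF K aK[OF t]])
    have kK: "t \<otimes> h \<otimes> inv (?n t) \<in> K" by (rule kT[OF T h t])
    have "inv\<^bsub>A\<^esub> g t \<otimes>\<^bsub>A\<^esub> k t \<otimes>\<^bsub>A\<^esub> g (?n t) = D #> (inv (a t) \<otimes> (t \<otimes> h \<otimes> inv (?n t)) \<otimes> a (?n t))"
      unfolding g_def k_def ab_inv[OF K aK[OF t]] ab_mult[OF K iaK kK]
      using ab_mult[OF K subgroup.m_closed[OF K iaK kK] aK[OF n]] .
    also have "inv (a t) \<otimes> (t \<otimes> h \<otimes> inv (?n t)) \<otimes> a (?n t) = \<sigma> t \<otimes> h \<otimes> inv (\<sigma> (?n t))"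
      unfolding a_def using c by (simp add: inv_mult_group m_assoc mic1 mic2)
    finally show ?thesis using nn[OF t] by simp
  qed
  have "phi G T' K h = finprod A (\<lambda>t'. D #> (t' \<otimes> h \<otimes> inv (?n' t'))) (\<sigma> ` T)"
    unfolding phi_def img ..
  also have "\<dots> = finprod A (\<lambda>t. D #> (\<sigma> t \<otimes> h \<otimes> inv (?n' (\<sigma> t)))) T"
    by (rule A.finprod_reindex) (use phi_Pi[OF T' h] img inj in auto)
  also have "\<dots> = finprod A (\<lambda>t. inv\<^bsub>A\<^esub> g t \<otimes>\<^bsub>A\<^esub> k t \<otimes>\<^bsub>A\<^esub> g (?n t)) T"
    by (rule A.finprod_cong') (use trm gP kP gnP in \<open>auto intro!: A.m_closed\<close>)
  also have "\<dots> = finprod A (\<lambda>t. inv\<^bsub>A\<^esub> g t) T \<otimes>\<^bsub>A\<^esub> finprod A k T \<otimes>\<^bsub>A\<^esub> finprod A (\<lambda>t. g (?n t)) T"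
    using igP kP gnP by (simp add: Pi_iff A.m_closed)
  also have "finprod A (\<lambda>t. g (?n t)) T = finprod A g (?n ` T)"
    by (rule A.finprod_reindex[symmetric]) (use gP nx_perm[OF H K T h f] nx_inj[OF H K T h] in auto)
  also have "?n ` T = T" by (rule nx_perm[OF H K T h f])
  also have "finprod A (\<lambda>t. inv\<^bsub>A\<^esub> g t) T \<otimes>\<^bsub>A\<^esub> finprod A k T \<otimes>\<^bsub>A\<^esub> finprod A g T
      = (finprod A (\<lambda>t. inv\<^bsub>A\<^esub> g t) T \<otimes>\<^bsub>A\<^esub> finprod A g T) \<otimes>\<^bsub>A\<^esub> finprod A k T"
    using igP kP gP by (simp add: A.m_ac)
  also have "finprod A (\<lambda>t. inv\<^bsub>A\<^esub> g t) T \<otimes>\<^bsub>A\<^esub> finprod A g T = finprod A (\<lambda>t. inv\<^bsub>A\<^esub> g t \<otimes>\<^bsub>A\<^esub> g t) T"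
    using igP gP by (simp add: A.finprod_multf)
  also have "\<dots> = \<one>\<^bsub>A\<^esub>" by (rule A.finprod_one_eqI) (use gP in \<open>auto simp: Pi_iff\<close>)
  finally show ?thesis using A.finprod_closed[OF kP] unfolding phi_def k_def by simp
qed


end

locale trpf = trp +
  assumes fi: "fidx G H K"
begin

definition "TS = (SOME T. rtv G H K T)"

lemma TS: "rtv G H K TS"
  unfolding TS_def using rtv_exists[OF H K] by (rule someI_ex)

lemma TSf: "finite TS" by (rule rtv_finite[OF H K TS fi])

lemma Tr_TS: "Tr G H K h = phi G TS K h"
  unfolding Tr_def TS_def ..

lemma Tr_phi: "rtv G H K T \<Longrightarrow> h \<in> H \<Longrightarrow> Tr G H K h = phi G T K h"
  unfolding Tr_TS using phi_indep[OF _ rtv_finite[OF H K _ fi] TS TSf] by blast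

lemma Tr_closed: "h \<in> H \<Longrightarrow> Tr G H K h \<in> carrier A"
  unfolding Tr_TS by (rule phi_closed[OF TS])

lemma Tr_mult: "h1 \<in> H \<Longrightarrow> h2 \<in> H \<Longrightarrow> Tr G H K (h1 \<otimes> h2) = Tr G H K h1 \<otimes>\<^bsub>A\<^esub> Tr G H K h2"
  unfolding Tr_TS by (rule phi_mult[OF TS TSf])

lemma Tr_inv: "h \<in> H \<Longrightarrow> Tr G H K (inv h) = inv\<^bsub>A\<^esub> Tr G H K h"
  unfolding Tr_TS by (rule phi_inv[OF TS TSf])

lemma Tr_one: "Tr G H K \<one> = \<one>\<^bsub>A\<^esub>"
  unfolding Tr_TS by (rule phi_one[OF TS])

lemma Tr_derived: "derived G H \<subseteq> {x \<in> H. Tr G H K x = \<one>\<^bsub>A\<^esub>}"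
proof -
  interpret A: comm_group A by (rule A_cg)
  let ?E = "{x \<in> H. Tr G H K x = \<one>\<^bsub>A\<^esub>}"
  have sub: "subgroup ?E G"
  proof (rule subgroupI)
    show "?E \<subseteq> carrier G" using Hc by blast
    show "?E \<noteq> {}" using subgroup.one_closed[OF H] Tr_one by blast
    fix a b assume a: "a \<in> ?E" and b: "b \<in> ?E"
    show "inv a \<in> ?E" using a Tr_inv subgroup.m_inv_closed[OF H] by simp
    show "a \<otimes> b \<in> ?E" using a b Tr_mult subgroup.m_closed[OF H] by simp
  qed
  have "derived_set G H \<subseteq> ?E"
  proof
    fix x assume "x \<in> derived_set G H"
    then obtain h1 h2 where h: "h1 \<in> H" "h2 \<in> H" "x = h1 \<otimes> h2 \<otimes> inv h1 \<otimes> inv h2" by blast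
    have i: "inv h1 \<in> H" "inv h2 \<in> H" using h subgroup.m_inv_closed[OF H] by auto
    have m: "h1 \<otimes> h2 \<in> H" "h1 \<otimes> h2 \<otimes> inv h1 \<in> H"
      using h i subgroup.m_closed[OF H] by auto
    have c: "Tr G H K h1 \<in> carrier A" "Tr G H K h2 \<in> carrier A" using Tr_closed h by auto
    have "Tr G H K x = Tr G H K h1 \<otimes>\<^bsub>A\<^esub> Tr G H K h2 \<otimes>\<^bsub>A\<^esub> inv\<^bsub>A\<^esub> Tr G H K h1 \<otimes>\<^bsub>A\<^esub> inv\<^bsub>A\<^esub> Tr G H K h2"
      unfolding h(3) Tr_mult[OF m(2) i(2)] Tr_mult[OF m(1) i(1)] Tr_mult[OF h(1) h(2)]
        Tr_inv[OF h(1)] Tr_inv[OF h(2)] ..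
    also have "\<dots> = \<one>\<^bsub>A\<^esub>" by (rule comm4[OF A_cg c])
    finally show "x \<in> ?E" using h(3) m i subgroup.m_closed[OF H] by auto
  qed
  thus ?thesis unfolding derived_def by (rule generate_subgroup_incl[OF _ sub])
qed

lemma Tr_cos:
  assumes h1: "h1 \<in> H" and h2: "h2 \<in> H" and e: "derived G H #> h1 = derived G H #> h2"
  shows "Tr G H K h1 = Tr G H K h2"
proof -
  interpret A: comm_group A by (rule A_cg)
  have d: "h1 \<otimes> inv h2 \<in> derived G H" using ab_eq[OF H h1 h2] e by blast
  hence t: "Tr G H K (h1 \<otimes> inv h2) = \<one>\<^bsub>A\<^esub>" using Tr_derived by blast
  have m: "h1 \<otimes> inv h2 \<in> H" using subgroup.m_closed[OF H h1 subgroup.m_inv_closed[OF H h2]] .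
  have "h1 = (h1 \<otimes> inv h2) \<otimes> h2" using Hc[OF h1] Hc[OF h2] by (simp add: m_assoc)
  hence "Tr G H K h1 = Tr G H K (h1 \<otimes> inv h2) \<otimes>\<^bsub>A\<^esub> Tr G H K h2"
    using Tr_mult[OF m h2] by simp
  thus ?thesis using t Tr_closed[OF h2] by simp
qed

lemma TrC_eq:
  assumes h: "h \<in> H"
  shows "TrC G H K (derived G H #> h) = Tr G H K h"
proof -
  interpret DH: subgroup "derived G H" G by (rule D_sub[OF H])
  have hc: "h \<in> carrier G" by (rule Hc[OF h])
  have "h \<in> derived G H #> h" by (rule rcos_self[OF hc DH.subgroup_axioms])
  hence x: "(SOME x. x \<in> derived G H #> h) \<in> derived G H #> h" by (rule someI)
  let ?x = "SOME x. x \<in> derived G H #> h"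
  have e: "derived G H #> h = derived G H #> ?x" by (rule repr_independence[OF x hc DH.subgroup_axioms])
  have "derived G H #> h \<subseteq> H"
    using D_in[OF H] h subgroup.m_closed[OF H] unfolding r_coset_def by blast
  hence xH: "?x \<in> H" using x by blast
  show ?thesis unfolding TrC_def using Tr_cos[OF xH h e[symmetric]] .
qed


end

lemma finprod_hom:
  assumes A: "comm_group A" and B: "comm_group B"
    and c: "\<And>x. x \<in> carrier A \<Longrightarrow> \<psi> x \<in> carrier B"
    and m: "\<And>x y. x \<in> carrier A \<Longrightarrow> y \<in> carrier A \<Longrightarrow> \<psi> (x \<otimes>\<^bsub>A\<^esub> y) = \<psi> x \<otimes>\<^bsub>B\<^esub> \<psi> y"
    and o: "\<psi> \<one>\<^bsub>A\<^esub> = \<one>\<^bsub>B\<^esub>"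
    and g: "g \<in> I \<rightarrow> carrier A"
  shows "\<psi> (finprod A g I) = finprod B (\<lambda>i. \<psi> (g i)) I"
  using g
proof (induct I rule: infinite_finite_induct)
  case (infinite I)
  then show ?case using o by (simp add: comm_monoid.finprod_infinite[OF comm_group.axioms(1)[OF A]]
      comm_monoid.finprod_infinite[OF comm_group.axioms(1)[OF B]])
next
  case empty
  then show ?case using o by (simp add: comm_monoid.finprod_empty[OF comm_group.axioms(1)[OF A]]
      comm_monoid.finprod_empty[OF comm_group.axioms(1)[OF B]])
next
  case (insert i I)
  interpret A: comm_group A by fact
  interpret B: comm_group B by fact
  have gi: "g i \<in> carrier A" and gI: "g \<in> I \<rightarrow> carrier A" using insert by auto
  have "\<psi> (finprod A g (insert i I)) = \<psi> (g i \<otimes>\<^bsub>A\<^esub> finprod A g I)"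
    using insert gi gI by simp
  also have "\<dots> = \<psi> (g i) \<otimes>\<^bsub>B\<^esub> \<psi> (finprod A g I)" by (rule m[OF gi A.finprod_closed[OF gI]])
  also have "\<psi> (finprod A g I) = finprod B (\<lambda>i. \<psi> (g i)) I" by (rule insert(3)[OF gI])
  also have "\<psi> (g i) \<otimes>\<^bsub>B\<^esub> finprod B (\<lambda>i. \<psi> (g i)) I = finprod B (\<lambda>i. \<psi> (g i)) (insert i I)"
    using insert c gI gi by (auto simp: Pi_iff)
  finally show ?case .
qed

locale trans3 = group G for G :: "('a,'b) monoid_scheme" (structure) +
  fixes H K J
  assumes H: "subgroup H G" and K: "subgroup K G" and J: "subgroup J G"
    and KH: "K \<subseteq> H" and JK: "J \<subseteq> K"
    and fHK: "fidx G H K" and fKJ: "fidx G K J" and fHJ: "fidx G H J"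
begin

sublocale HK: trpf G H K
  using H K KH fHK is_group by (simp add: trpf_def trp_def trpf_axioms_def trp_axioms_def)
sublocale KJ: trpf G K J
  using K J JK fKJ is_group by (simp add: trpf_def trp_def trpf_axioms_def trp_axioms_def)
sublocale HJ: trpf G H J
  using H J JK KH fHJ is_group by (simp add: trpf_def trp_def trpf_axioms_def trp_axioms_def)

lemma ST_unique:
  assumes T: "rtv G H K T" and S: "rtv G K J S"
    and s1: "s1 \<in> S" and s2: "s2 \<in> S" and t1: "t1 \<in> T" and t2: "t2 \<in> T"
    and xc: "x \<in> carrier G" and x1: "x \<in> J #> (s1 \<otimes> t1)" and x2: "x \<in> J #> (s2 \<otimes> t2)"
  shows "s1 = s2 \<and> t1 = t2"
proof -
  have c: "s1 \<in> carrier G" "s2 \<in> carrier G" "t1 \<in> carrier G" "t2 \<in> carrier G"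
    using HK.Tc[OF T t1] HK.Tc[OF T t2] KJ.Tc[OF S s1] KJ.Tc[OF S s2] by auto
  have sK: "s1 \<in> K" "s2 \<in> K" using rtv_sub[OF S] s1 s2 by auto
  have j1: "x \<otimes> inv (s1 \<otimes> t1) \<in> J" using subgroup.rcos_module_imp[OF J is_group _ x1] c by simp
  have j2: "x \<otimes> inv (s2 \<otimes> t2) \<in> J" using subgroup.rcos_module_imp[OF J is_group _ x2] c by simp
  have e1: "x \<otimes> inv t1 = (x \<otimes> inv (s1 \<otimes> t1)) \<otimes> s1" using c xc by (simp add: inv_mult_group m_assoc)
  have e2: "x \<otimes> inv t2 = (x \<otimes> inv (s2 \<otimes> t2)) \<otimes> s2" using c xc by (simp add: inv_mult_group m_assoc)
  have k1: "x \<otimes> inv t1 \<in> K" unfolding e1 using subgroup.m_closed[OF K _ sK(1)] j1 JK by blast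
  have k2: "x \<otimes> inv t2 \<in> K" unfolding e2 using subgroup.m_closed[OF K _ sK(2)] j2 JK by blast
  have "inv (x \<otimes> inv t1) \<otimes> (x \<otimes> inv t2) \<in> K"
    by (rule subgroup.m_closed[OF K subgroup.m_inv_closed[OF K k1] k2])
  also have "inv (x \<otimes> inv t1) \<otimes> (x \<otimes> inv t2) = t1 \<otimes> inv t2"
    using c xc by (simp add: inv_mult_group m_assoc mic2)
  finally have tt: "t1 = t2" by (rule rtv_eq[OF H K T t1 t2])
  have e3: "x \<otimes> inv (s1 \<otimes> t1) = (x \<otimes> inv t1) \<otimes> inv s1" using c xc by (simp add: inv_mult_group m_assoc)
  have e4: "x \<otimes> inv (s2 \<otimes> t2) = (x \<otimes> inv t1) \<otimes> inv s2" using c xc tt by (simp add: inv_mult_group m_assoc)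
  have "inv ((x \<otimes> inv t1) \<otimes> inv s2) \<otimes> ((x \<otimes> inv t1) \<otimes> inv s1) \<in> J"
    using subgroup.m_closed[OF J subgroup.m_inv_closed[OF J j2] j1] unfolding e3 e4 .
  also have "inv ((x \<otimes> inv t1) \<otimes> inv s2) \<otimes> ((x \<otimes> inv t1) \<otimes> inv s1) = s2 \<otimes> inv s1"
    using c xc by (simp add: inv_mult_group m_assoc mic1 mic2)
  finally have "s2 = s1" by (rule rtv_eq[OF K J S s2 s1])
  thus ?thesis using tt by simp
qed

lemma ST_rtv:
  assumes T: "rtv G H K T" and S: "rtv G K J S"
  shows "rtv G H J ((\<lambda>(s,t). s \<otimes> t) ` (S \<times> T))"
  unfolding rtv_def
proof (intro conjI ballI)
  show "(\<lambda>(s,t). s \<otimes> t) ` (S \<times> T) \<subseteq> H"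
  proof
    fix x assume "x \<in> (\<lambda>(s,t). s \<otimes> t) ` (S \<times> T)"
    then obtain s t where st: "s \<in> S" "t \<in> T" "x = s \<otimes> t" by auto
    have "s \<in> H" using KH rtv_sub[OF S st(1)] by (rule subsetD)
    moreover have "t \<in> H" by (rule rtv_sub[OF T st(2)])
    ultimately show "x \<in> H" unfolding st(3) by (rule subgroup.m_closed[OF H])
  qed
  fix h assume h: "h \<in> H"
  have hc: "h \<in> carrier G" by (rule HK.Hc[OF h])
  obtain t where t: "t \<in> T" "h \<in> K #> t" using T h unfolding rtv_def by blast
  have tc: "t \<in> carrier G" by (rule HK.Tc[OF T t(1)])
  have k: "h \<otimes> inv t \<in> K" using subgroup.rcos_module_imp[OF K is_group tc t(2)] .
  obtain s where s: "s \<in> S" "h \<otimes> inv t \<in> J #> s" using S k unfolding rtv_def by blast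
  have sc: "s \<in> carrier G" by (rule KJ.Tc[OF S s(1)])
  have "(h \<otimes> inv t) \<otimes> inv s \<in> J" using subgroup.rcos_module_imp[OF J is_group sc s(2)] .
  also have "(h \<otimes> inv t) \<otimes> inv s = h \<otimes> inv (s \<otimes> t)" using hc tc sc by (simp add: inv_mult_group m_assoc)
  finally have "h \<in> J #> (s \<otimes> t)" using subgroup.rcos_module_rev[OF J is_group _ hc] sc tc by simp
  moreover have "s \<otimes> t \<in> (\<lambda>(s,t). s \<otimes> t) ` (S \<times> T)"
    by (rule rev_image_eqI[of "(s,t)"]) (use s t in auto)
  ultimately have ex: "s \<otimes> t \<in> (\<lambda>(s,t). s \<otimes> t) ` (S \<times> T) \<and> h \<in> J #> (s \<otimes> t)" by (rule conjI[rotated])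
  show "\<exists>!x. x \<in> (\<lambda>(s,t). s \<otimes> t) ` (S \<times> T) \<and> h \<in> J #> x"
  proof (rule ex1I[where a="s \<otimes> t" and P="\<lambda>x. x \<in> (\<lambda>(s,t). s \<otimes> t) ` (S \<times> T) \<and> h \<in> J #> x", OF ex])
    fix x assume "x \<in> (\<lambda>(s,t). s \<otimes> t) ` (S \<times> T) \<and> h \<in> J #> x"
    then obtain s' t' where st': "s' \<in> S" "t' \<in> T" "x = s' \<otimes> t'" "h \<in> J #> (s' \<otimes> t')" by auto
    have "s' = s \<and> t' = t" by (rule ST_unique[OF T S st'(1) s(1) st'(2) t(1) hc st'(4) conjunct2[OF ex]])
    thus "x = s \<otimes> t" using st'(3) by simp
  qed
qed


lemma TrC_KJ_closed: "x \<in> carrier (abG G K) \<Longrightarrow> TrC G K J x \<in> carrier (abG G J)"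
  using ab_carrier[OF K] KJ.TrC_eq KJ.Tr_closed by auto

lemma TrC_KJ_mult: "x \<in> carrier (abG G K) \<Longrightarrow> y \<in> carrier (abG G K) \<Longrightarrow>
   TrC G K J (x \<otimes>\<^bsub>abG G K\<^esub> y) = TrC G K J x \<otimes>\<^bsub>abG G J\<^esub> TrC G K J y"
proof -
  assume "x \<in> carrier (abG G K)" "y \<in> carrier (abG G K)"
  then obtain a b where ab: "a \<in> K" "b \<in> K" "x = derived G K #> a" "y = derived G K #> b"
    using ab_carrier[OF K] by auto
  have m: "a \<otimes> b \<in> K" by (rule subgroup.m_closed[OF K ab(1,2)])
  show ?thesis unfolding ab(3,4) ab_mult[OF K ab(1,2)] KJ.TrC_eq[OF m] KJ.TrC_eq[OF ab(1)] KJ.TrC_eq[OF ab(2)]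
    by (rule KJ.Tr_mult[OF ab(1,2)])
qed

lemma TrC_KJ_one: "TrC G K J \<one>\<^bsub>abG G K\<^esub> = \<one>\<^bsub>abG G J\<^esub>"
  unfolding ab_one[OF K] KJ.TrC_eq[OF subgroup.one_closed[OF K]] by (rule KJ.Tr_one)

lemma Tr_trans:
  assumes h: "h \<in> H"
  shows "Tr G H J h = TrC G K J (Tr G H K h)"
proof -
  interpret AK: comm_group "abG G K" by (rule ab_cg[OF K])
  interpret AJ: comm_group "abG G J" by (rule ab_cg[OF J])
  define T where "T = HK.TS"
  define S where "S = KJ.TS"
  have T: "rtv G H K T" and fT: "finite T" unfolding T_def by (rule HK.TS, rule HK.TSf)
  have S: "rtv G K J S" and fS: "finite S" unfolding S_def by (rule KJ.TS, rule KJ.TSf)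
  define k where "k t = t \<otimes> h \<otimes> inv (nx G T K h t)" for t
  have kK: "k t \<in> K" if "t \<in> T" for t unfolding k_def by (rule HK.kT[OF T h that])
  define f where "f t s = derived G J #> (s \<otimes> k t \<otimes> inv (nx G S J (k t) s))" for t s
  have fP: "f t \<in> S \<rightarrow> carrier (abG G J)" if "t \<in> T" for t
    unfolding f_def using KJ.phi_Pi[OF S kK[OF that]] .
  have "TrC G K J (Tr G H K h) = TrC G K J (finprod (abG G K) (\<lambda>t. derived G K #> k t) T)"
    unfolding HK.Tr_TS phi_def k_def T_def ..
  also have "\<dots> = finprod (abG G J) (\<lambda>t. TrC G K J (derived G K #> k t)) T"
    by (rule finprod_hom[OF ab_cg[OF K] ab_cg[OF J] TrC_KJ_closed TrC_KJ_mult TrC_KJ_one])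
       (use ab_in[OF K] kK in auto)
  also have "\<dots> = finprod (abG G J) (\<lambda>t. finprod (abG G J) (f t) S) T"
  proof (rule AJ.finprod_cong')
    show "(\<lambda>t. finprod (abG G J) (f t) S) \<in> T \<rightarrow> carrier (abG G J)"
      by (rule Pi_I) (rule AJ.finprod_closed[OF fP])
    fix t assume t: "t \<in> T"
    show "TrC G K J (derived G K #> k t) = finprod (abG G J) (f t) S"
      unfolding KJ.TrC_eq[OF kK[OF t]] KJ.Tr_TS phi_def f_def S_def ..
  qed simp
  finally have R: "TrC G K J (Tr G H K h) = finprod (abG G J) (\<lambda>t. finprod (abG G J) (f t) S) T" .
  define ST where "ST = (\<lambda>(s,t). s \<otimes> t) ` (S \<times> T)"
  have STr: "rtv G H J ST" unfolding ST_def by (rule ST_rtv[OF T S])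
  define g where "g x = derived G J #> (x \<otimes> h \<otimes> inv (nx G ST J h x))" for x
  have gP: "g \<in> ST \<rightarrow> carrier (abG G J)" unfolding g_def by (rule HJ.phi_Pi[OF STr h])
  have STU: "ST = (\<Union>t\<in>T. (\<lambda>s. s \<otimes> t) ` S)" unfolding ST_def by fast
  have sc: "s \<in> carrier G" if "s \<in> S" for s using KJ.Tc[OF S that] .
  have tc: "t \<in> carrier G" if "t \<in> T" for t using HK.Tc[OF T that] .
  have hc: "h \<in> carrier G" by (rule HK.Hc[OF h])
  have disj: "pairwise (\<lambda>i j. disjnt ((\<lambda>s. s \<otimes> i) ` S) ((\<lambda>s. s \<otimes> j) ` S)) T"
    unfolding pairwise_def disjnt_def
  proof (intro ballI impI)
    fix t1 t2 assume t1: "t1 \<in> T" and t2: "t2 \<in> T" and ne: "t1 \<noteq> t2"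
    show "(\<lambda>s. s \<otimes> t1) ` S \<inter> (\<lambda>s. s \<otimes> t2) ` S = {}"
    proof (rule ccontr)
      assume "(\<lambda>s. s \<otimes> t1) ` S \<inter> (\<lambda>s. s \<otimes> t2) ` S \<noteq> {}"
      then obtain s1 s2 where s: "s1 \<in> S" "s2 \<in> S" "s1 \<otimes> t1 = s2 \<otimes> t2" by auto
      have xc: "s1 \<otimes> t1 \<in> carrier G" using sc[OF s(1)] tc[OF t1] by simp
      have x: "s1 \<otimes> t1 \<in> J #> (s1 \<otimes> t1)" by (rule rcos_self[OF xc J])
      have "s1 = s2 \<and> t1 = t2"
        by (rule ST_unique[OF T S s(1) s(2) t1 t2 xc x]) (use x s(3) in simp)
      thus False using ne by simp
    qed
  qed
  have nST: "nx G ST J h (s \<otimes> t) = nx G S J (k t) s \<otimes> nx G T K h t" if s: "s \<in> S" and t: "t \<in> T" for s t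
  proof -
    let ?s' = "nx G S J (k t) s" and ?t' = "nx G T K h t"
    have s': "?s' \<in> S" by (rule KJ.nxT[OF S kK[OF t] s])
    have t': "?t' \<in> T" by (rule HK.nxT[OF T h t])
    have "s \<otimes> k t \<otimes> inv ?s' \<in> J" by (rule KJ.kT[OF S kK[OF t] s])
    also have "s \<otimes> k t \<otimes> inv ?s' = (s \<otimes> t) \<otimes> h \<otimes> inv (?s' \<otimes> ?t')"
      using id5[OF sc[OF s] tc[OF t] hc sc[OF s'] tc[OF t']] by (simp add: k_def[of t])
    finally have "(s \<otimes> t) \<otimes> h \<in> J #> (?s' \<otimes> ?t')"
      using subgroup.rcos_module_rev[OF J is_group _ _] sc[OF s] sc[OF s'] tc[OF t] tc[OF t'] hc by simp
    moreover have "s \<otimes> t \<in> ST" "?s' \<otimes> ?t' \<in> ST" unfolding ST_def using s t s' t' by auto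
    ultimately show ?thesis using nx_unique[OF H STr h] by blast
  qed
  have gf: "g (s \<otimes> t) = f t s" if s: "s \<in> S" and t: "t \<in> T" for s t
  proof -
    let ?s' = "nx G S J (k t) s" and ?t' = "nx G T K h t"
    have s': "?s' \<in> S" by (rule KJ.nxT[OF S kK[OF t] s])
    have t': "?t' \<in> T" by (rule HK.nxT[OF T h t])
    have "s \<otimes> k t \<otimes> inv ?s' = (s \<otimes> t) \<otimes> h \<otimes> inv (?s' \<otimes> ?t')"
      using id5[OF sc[OF s] tc[OF t] hc sc[OF s'] tc[OF t']] by (simp add: k_def[of t])
    thus ?thesis unfolding g_def f_def nST[OF s t] by simp
  qed
  have "Tr G H J h = phi G ST J h" by (rule HJ.Tr_phi[OF STr h])
  also have "\<dots> = finprod (abG G J) g (\<Union>t\<in>T. (\<lambda>s. s \<otimes> t) ` S)" unfolding phi_def g_def STU ..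
  also have "\<dots> = finprod (abG G J) (\<lambda>t. finprod (abG G J) g ((\<lambda>s. s \<otimes> t) ` S)) T"
    by (rule AJ.finprod_UN_disjoint[OF fT _ disj]) (use fS gP STU in auto)
  also have "\<dots> = finprod (abG G J) (\<lambda>t. finprod (abG G J) (f t) S) T"
  proof (rule AJ.finprod_cong')
    show "(\<lambda>t. finprod (abG G J) (f t) S) \<in> T \<rightarrow> carrier (abG G J)"
      by (rule Pi_I) (rule AJ.finprod_closed[OF fP])
    fix t assume t: "t \<in> T"
    have inj: "inj_on (\<lambda>s. s \<otimes> t) S" by (rule inj_onI) (use sc tc[OF t] in simp)
    have "finprod (abG G J) g ((\<lambda>s. s \<otimes> t) ` S) = finprod (abG G J) (\<lambda>s. g (s \<otimes> t)) S"
      by (rule AJ.finprod_reindex[OF _ inj]) (use gP STU t in auto)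
    also have "\<dots> = finprod (abG G J) (f t) S"
      by (rule AJ.finprod_cong') (use gf t fP[OF t] in auto)
    finally show "finprod (abG G J) g ((\<lambda>s. s \<otimes> t) ` S) = finprod (abG G J) (f t) S" .
  qed simp
  finally show ?thesis using R by simp
qed


end

locale mack = group G for G :: "('a,'b) monoid_scheme" (structure) +
  fixes H K H' K' c
  assumes H: "subgroup H G" and K: "subgroup K G" and KH: "K \<subseteq> H" and fHK: "fidx G H K"
    and H': "subgroup H' G" and K': "subgroup K' G" and KH': "K' \<subseteq> H'" and fHK': "fidx G H' K'"
    and cmult: "\<And>x y. x \<in> H' \<Longrightarrow> y \<in> H' \<Longrightarrow> c (x \<otimes> y) = c x \<otimes> c y"
    and cH: "\<And>x. x \<in> H' \<Longrightarrow> c x \<in> H"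
    and cK: "\<And>x. x \<in> H' \<Longrightarrow> c x \<in> K \<longleftrightarrow> x \<in> K'"
    and prod: "\<And>h. h \<in> H \<Longrightarrow> \<exists>k\<in>K. \<exists>x\<in>H'. h = k \<otimes> c x"
begin

sublocale P: trpf G H K
  using H K KH fHK is_group by (simp add: trpf_def trp_def trpf_axioms_def trp_axioms_def)
sublocale P': trpf G H' K'
  using H' K' KH' fHK' is_group by (simp add: trpf_def trp_def trpf_axioms_def trp_axioms_def)

lemma cc: "x \<in> H' \<Longrightarrow> c x \<in> carrier G" using cH P.Hc by blast

lemma cone: "c \<one> = \<one>"
proof -
  have o: "\<one> \<in> H'" by (rule subgroup.one_closed[OF H'])
  have "c \<one> \<otimes> c \<one> = c \<one> \<otimes> \<one>" using cmult[OF o o] cc[OF o] by simp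
  thus ?thesis using cc[OF o] by (metis l_cancel one_closed)
qed

lemma cinv: "x \<in> H' \<Longrightarrow> c (inv x) = inv (c x)"
proof -
  assume x: "x \<in> H'"
  have ix: "inv x \<in> H'" by (rule subgroup.m_inv_closed[OF H' x])
  have "c (inv x) \<otimes> c x = \<one>" using cmult[OF ix x] cone P'.Hc[OF x] by simp
  from inv_equality[OF this cc[OF x] cc[OF ix]] show ?thesis by simp
qed

lemma cT_eq:
  assumes T: "rtv G H' K' T" and t1: "t1 \<in> T" and t2: "t2 \<in> T"
    and k: "c t1 \<otimes> inv (c t2) \<in> K"
  shows "t1 = t2"
proof -
  have h: "t1 \<in> H'" "t2 \<in> H'" using rtv_sub[OF T] t1 t2 by auto
  have i: "inv t2 \<in> H'" by (rule subgroup.m_inv_closed[OF H' h(2)])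
  have m: "t1 \<otimes> inv t2 \<in> H'" by (rule subgroup.m_closed[OF H' h(1) i])
  have "c (t1 \<otimes> inv t2) = c t1 \<otimes> inv (c t2)" using cmult[OF h(1) i] cinv[OF h(2)] by simp
  hence "t1 \<otimes> inv t2 \<in> K'" using cK[OF m] k by simp
  thus ?thesis by (rule rtv_eq[OF H' K' T t1 t2])
qed

lemma cT_rtv:
  assumes T: "rtv G H' K' T"
  shows "rtv G H K (c ` T)"
  unfolding rtv_def
proof (intro conjI ballI)
  show "c ` T \<subseteq> H" using cH rtv_sub[OF T] by blast
  fix h assume h: "h \<in> H"
  obtain k x where kx: "k \<in> K" "x \<in> H'" "h = k \<otimes> c x" using prod[OF h] by blast
  obtain t where t: "t \<in> T" "x \<in> K' #> t" using T kx(2) unfolding rtv_def by blast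
  have tH: "t \<in> H'" by (rule rtv_sub[OF T t(1)])
  have tc: "t \<in> carrier G" by (rule P'.Hc[OF tH])
  have xt: "x \<otimes> inv t \<in> K'" by (rule subgroup.rcos_module_imp[OF K' is_group tc t(2)])
  have it: "inv t \<in> H'" by (rule subgroup.m_inv_closed[OF H' tH])
  have "c (x \<otimes> inv t) \<in> K" using cK[OF subgroup.m_closed[OF H' kx(2) it]] xt by simp
  hence "k \<otimes> c (x \<otimes> inv t) \<in> K" by (rule subgroup.m_closed[OF K kx(1)])
  also have "k \<otimes> c (x \<otimes> inv t) = h \<otimes> inv (c t)"
    unfolding kx(3) cmult[OF kx(2) it] cinv[OF tH] using P.Kc[OF kx(1)] cc[OF kx(2)] cc[OF tH]
    by (simp add: m_assoc)
  finally have "h \<in> K #> c t"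
    using subgroup.rcos_module_rev[OF K is_group cc[OF tH] P.Hc[OF h]] by blast
  hence ex: "c t \<in> c ` T \<and> h \<in> K #> c t" using t(1) by blast
  show "\<exists>!u. u \<in> c ` T \<and> h \<in> K #> u"
  proof (rule ex1I[where a="c t" and P="\<lambda>u. u \<in> c ` T \<and> h \<in> K #> u", OF ex])
    fix u assume "u \<in> c ` T \<and> h \<in> K #> u"
    then obtain t' where t': "t' \<in> T" "u = c t'" "h \<in> K #> c t'" by blast
    have t'H: "t' \<in> H'" by (rule rtv_sub[OF T t'(1)])
    have a: "h \<otimes> inv (c t') \<in> K" by (rule subgroup.rcos_module_imp[OF K is_group cc[OF t'H] t'(3)])
    have b: "h \<otimes> inv (c t) \<in> K" by (rule subgroup.rcos_module_imp[OF K is_group cc[OF tH] conjunct2[OF ex]])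
    have "inv (h \<otimes> inv (c t')) \<otimes> (h \<otimes> inv (c t)) \<in> K"
      by (rule subgroup.m_closed[OF K subgroup.m_inv_closed[OF K a] b])
    also have "inv (h \<otimes> inv (c t')) \<otimes> (h \<otimes> inv (c t)) = c t' \<otimes> inv (c t)"
      using P.Hc[OF h] cc[OF t'H] cc[OF tH] by (simp add: inv_mult_group m_assoc mic2)
    finally have "t' = t" by (rule cT_eq[OF T t'(1) t(1)])
    thus "u = c t" using t'(2) by simp
  qed
qed

lemma c_derived: "c ` derived G K' \<subseteq> derived G K"
proof -
  let ?E = "{x \<in> H'. c x \<in> derived G K}"
  interpret DK: subgroup "derived G K" G by (rule D_sub[OF K])
  have sub: "subgroup ?E G"
  proof (rule subgroupI)
    show "?E \<subseteq> carrier G" using P'.Hc by blast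
    show "?E \<noteq> {}" using subgroup.one_closed[OF H'] cone DK.one_closed by auto
    fix a b assume a: "a \<in> ?E" and b: "b \<in> ?E"
    show "inv a \<in> ?E" using a cinv subgroup.m_inv_closed[OF H'] DK.m_inv_closed by auto
    show "a \<otimes> b \<in> ?E" using a b cmult subgroup.m_closed[OF H'] DK.m_closed by auto
  qed
  have "derived_set G K' \<subseteq> ?E"
  proof
    fix x assume "x \<in> derived_set G K'"
    then obtain a b where ab: "a \<in> K'" "b \<in> K'" "x = a \<otimes> b \<otimes> inv a \<otimes> inv b" by blast
    have H'ab: "a \<in> H'" "b \<in> H'" using ab KH' by auto
    have i: "inv a \<in> H'" "inv b \<in> H'" using H'ab subgroup.m_inv_closed[OF H'] by auto
    have m: "a \<otimes> b \<in> H'" "a \<otimes> b \<otimes> inv a \<in> H'"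
      using H'ab i subgroup.m_closed[OF H'] by auto
    have xH: "x \<in> H'" unfolding ab(3) using m i subgroup.m_closed[OF H'] by auto
    have cK': "c a \<in> K" "c b \<in> K" using cK H'ab ab by auto
    have "c x = c a \<otimes> c b \<otimes> inv (c a) \<otimes> inv (c b)"
      unfolding ab(3) cmult[OF m(2) i(2)] cmult[OF m(1) i(1)] cmult[OF H'ab] cinv[OF H'ab(1)] cinv[OF H'ab(2)] ..
    also have "\<dots> \<in> derived_set G K" using cK' by blast
    finally have "c x \<in> derived G K" unfolding derived_def by (rule generate.incl)
    thus "x \<in> ?E" using xH by blast
  qed
  hence "derived G K' \<subseteq> ?E" unfolding derived_def[of G K'] by (rule generate_subgroup_incl[OF _ sub])
  thus ?thesis by blast
qed

definition "psi Cl = derived G K <#> (c ` Cl)"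

lemma psi_cos:
  assumes w: "w \<in> K'"
  shows "psi (derived G K' #> w) = derived G K #> c w"
proof -
  interpret DK: subgroup "derived G K" G by (rule D_sub[OF K])
  have wH: "w \<in> H'" using w KH' by blast
  have DK'H: "derived G K' \<subseteq> H'" using D_in[OF K'] KH' by blast
  have img: "c ` (derived G K' #> w) = (c ` derived G K') #> c w"
  proof -
    have "c ` (derived G K' #> w) = (\<lambda>d. c d \<otimes> c w) ` derived G K'"
      unfolding r_coset_def using cmult[OF _ wH] DK'H by force
    also have "\<dots> = (c ` derived G K') #> c w" unfolding r_coset_def by blast
    finally show ?thesis .
  qed
  have sub: "c ` derived G K' \<subseteq> carrier G" using c_derived DK.subset by blast
  have one: "\<one> \<in> c ` derived G K'"
    using cone subgroup.one_closed[OF D_sub[OF K']] by (metis image_eqI)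
  have "derived G K <#> c ` derived G K' = derived G K"
  proof
    show "derived G K <#> c ` derived G K' \<subseteq> derived G K"
      using c_derived DK.m_closed unfolding set_mult_def by blast
    show "derived G K \<subseteq> derived G K <#> c ` derived G K'"
    proof
      fix x assume x: "x \<in> derived G K"
      have "x = x \<otimes> \<one>" using x DK.subset by auto
      thus "x \<in> derived G K <#> c ` derived G K'" unfolding set_mult_def using x one by blast
    qed
  qed
  thus ?thesis unfolding psi_def img setmult_rcos_assoc[OF DK.subset sub cc[OF wH]] by simp
qed


lemma psi_closed: "Cl \<in> carrier (abG G K') \<Longrightarrow> psi Cl \<in> carrier (abG G K)"
proof -
  assume "Cl \<in> carrier (abG G K')"
  then obtain w where w: "w \<in> K'" "Cl = derived G K' #> w" using ab_carrier[OF K'] by auto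
  have "c w \<in> K" using cK w KH' by blast
  thus ?thesis unfolding w(2) psi_cos[OF w(1)] by (rule ab_in[OF K])
qed

lemma psi_mult: "Cl1 \<in> carrier (abG G K') \<Longrightarrow> Cl2 \<in> carrier (abG G K') \<Longrightarrow>
   psi (Cl1 \<otimes>\<^bsub>abG G K'\<^esub> Cl2) = psi Cl1 \<otimes>\<^bsub>abG G K\<^esub> psi Cl2"
proof -
  assume "Cl1 \<in> carrier (abG G K')" "Cl2 \<in> carrier (abG G K')"
  then obtain a b where ab: "a \<in> K'" "b \<in> K'" "Cl1 = derived G K' #> a" "Cl2 = derived G K' #> b"
    using ab_carrier[OF K'] by auto
  have H'ab: "a \<in> H'" "b \<in> H'" using ab KH' by auto
  have cab: "c a \<in> K" "c b \<in> K" using cK H'ab ab by auto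
  have m: "a \<otimes> b \<in> K'" by (rule subgroup.m_closed[OF K' ab(1,2)])
  show ?thesis unfolding ab(3,4) ab_mult[OF K' ab(1,2)] psi_cos[OF m] psi_cos[OF ab(1)] psi_cos[OF ab(2)]
      ab_mult[OF K cab] cmult[OF H'ab] ..
qed

lemma psi_one: "psi \<one>\<^bsub>abG G K'\<^esub> = \<one>\<^bsub>abG G K\<^esub>"
  unfolding ab_one[OF K'] psi_cos[OF subgroup.one_closed[OF K']] cone ab_one[OF K] ..

lemma Tr_conj:
  assumes y: "y \<in> H'"
  shows "Tr G H K (c y) = psi (Tr G H' K' y)"
proof -
  interpret AK: comm_group "abG G K" by (rule ab_cg[OF K])
  define T where "T = P'.TS"
  have T: "rtv G H' K' T" and fT: "finite T" unfolding T_def by (rule P'.TS, rule P'.TSf)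
  have cT: "rtv G H K (c ` T)" by (rule cT_rtv[OF T])
  have cy: "c y \<in> H" by (rule cH[OF y])
  have tH: "t \<in> H'" if "t \<in> T" for t using rtv_sub[OF T that] .
  have inj: "inj_on c T"
  proof (rule inj_onI)
    fix t1 t2 assume t: "t1 \<in> T" "t2 \<in> T" and e: "c t1 = c t2"
    have "c t1 \<otimes> inv (c t2) \<in> K" using e cc[OF tH[OF t(2)]] subgroup.one_closed[OF K] by simp
    thus "t1 = t2" by (rule cT_eq[OF T t])
  qed
  define n where "n t = nx G T K' y t" for t
  have nT: "n t \<in> T" if "t \<in> T" for t unfolding n_def by (rule P'.nxT[OF T y that])
  have w: "t \<otimes> y \<otimes> inv (n t) \<in> K'" if "t \<in> T" for t unfolding n_def by (rule P'.kT[OF T y that])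
  have wH: "t \<otimes> y \<otimes> inv (n t) \<in> H'" if "t \<in> T" for t using w[OF that] KH' by blast
  have cw: "c (t \<otimes> y \<otimes> inv (n t)) = c t \<otimes> c y \<otimes> inv (c (n t))" if t: "t \<in> T" for t
  proof -
    have a: "t \<otimes> y \<in> H'" by (rule subgroup.m_closed[OF H' tH[OF t] y])
    have b: "inv (n t) \<in> H'" by (rule subgroup.m_inv_closed[OF H' tH[OF nT[OF t]]])
    show ?thesis unfolding cmult[OF a b] cmult[OF tH[OF t] y] cinv[OF tH[OF nT[OF t]]] ..
  qed
  have nn: "nx G (c ` T) K (c y) (c t) = c (n t)" if t: "t \<in> T" for t
  proof (rule nx_unique[OF H cT cy])
    show "c t \<in> c ` T" "c (n t) \<in> c ` T" using t nT[OF t] by auto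
    have "c (t \<otimes> y \<otimes> inv (n t)) \<in> K" using cK[OF wH[OF t]] w[OF t] by simp
    thus "c t \<otimes> c y \<in> K #> c (n t)" unfolding cw[OF t]
      using subgroup.rcos_module_rev[OF K is_group cc[OF tH[OF nT[OF t]]]] cc[OF tH[OF t]] cc[OF y] by simp
  qed
  have "Tr G H K (c y) = phi G (c ` T) K (c y)" by (rule P.Tr_phi[OF cT cy])
  also have "\<dots> = finprod (abG G K) (\<lambda>u. derived G K #> (u \<otimes> c y \<otimes> inv (nx G (c ` T) K (c y) u))) (c ` T)"
    unfolding phi_def ..
  also have "\<dots> = finprod (abG G K) (\<lambda>t. derived G K #> (c t \<otimes> c y \<otimes> inv (nx G (c ` T) K (c y) (c t)))) T"
    by (rule AK.finprod_reindex[OF _ inj]) (rule P.phi_Pi[OF cT cy])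
  also have "\<dots> = finprod (abG G K) (\<lambda>t. psi (derived G K' #> (t \<otimes> y \<otimes> inv (n t)))) T"
  proof (rule AK.finprod_cong')
    show "(\<lambda>t. psi (derived G K' #> (t \<otimes> y \<otimes> inv (n t)))) \<in> T \<rightarrow> carrier (abG G K)"
      using psi_closed ab_in[OF K'] w by blast
    fix t assume t: "t \<in> T"
    show "derived G K #> (c t \<otimes> c y \<otimes> inv (nx G (c ` T) K (c y) (c t))) = psi (derived G K' #> (t \<otimes> y \<otimes> inv (n t)))"
      unfolding psi_cos[OF w[OF t]] cw[OF t] nn[OF t] ..
  qed simp
  also have "\<dots> = psi (finprod (abG G K') (\<lambda>t. derived G K' #> (t \<otimes> y \<otimes> inv (n t))) T)"
    by (rule finprod_hom[OF ab_cg[OF K'] ab_cg[OF K] psi_closed psi_mult psi_one, symmetric])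
       (auto intro!: ab_in[OF K'] w)
  also have "finprod (abG G K') (\<lambda>t. derived G K' #> (t \<otimes> y \<otimes> inv (n t))) T = Tr G H' K' y"
    unfolding P'.Tr_TS phi_def n_def T_def ..
  finally show ?thesis .
qed

end



lemma SL2Z_mult: "x \<otimes>\<^bsub>SL2Z\<^esub> y = m2_mult x y" by (simp add: SL2Z_def)
lemma SL2Z_carrier: "carrier SL2Z = {A. m2_det A = 1}" by (simp add: SL2Z_def)
lemma SL2Z_one: "\<one>\<^bsub>SL2Z\<^esub> = M2 1 0 0 1" by (simp add: SL2Z_def)

lemma det_mult: "m2_det (m2_mult x y) = m2_det x * m2_det y"
  by (cases x; cases y) (simp add: algebra_simps)

lemma SL2Z_group: "group SL2Z"
proof (rule groupI)
  fix x y assume "x \<in> carrier SL2Z" "y \<in> carrier SL2Z"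
  thus "x \<otimes>\<^bsub>SL2Z\<^esub> y \<in> carrier SL2Z" by (simp add: SL2Z_carrier SL2Z_mult det_mult)
next
  show "\<one>\<^bsub>SL2Z\<^esub> \<in> carrier SL2Z" by (simp add: SL2Z_carrier SL2Z_one)
next
  fix x y z
  show "x \<otimes>\<^bsub>SL2Z\<^esub> y \<otimes>\<^bsub>SL2Z\<^esub> z = x \<otimes>\<^bsub>SL2Z\<^esub> (y \<otimes>\<^bsub>SL2Z\<^esub> z)"
    by (cases x; cases y; cases z) (simp add: SL2Z_mult algebra_simps)
next
  fix x show "\<one>\<^bsub>SL2Z\<^esub> \<otimes>\<^bsub>SL2Z\<^esub> x = x" by (cases x) (simp add: SL2Z_mult SL2Z_one)
next
  fix x assume x: "x \<in> carrier SL2Z"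
  obtain p q u v where e: "x = M2 p q u v" by (cases x)
  have d: "p*v - q*u = 1" using x e by (simp add: SL2Z_carrier)
  show "\<exists>y\<in>carrier SL2Z. y \<otimes>\<^bsub>SL2Z\<^esub> x = \<one>\<^bsub>SL2Z\<^esub>"
    by (rule bexI[of _ "M2 v (-q) (-u) p"]) (use d in \<open>simp_all add: e SL2Z_mult SL2Z_one SL2Z_carrier algebra_simps\<close>)
qed

interpretation S: group SL2Z by (rule SL2Z_group)

lemma SL2Z_inv: "p*v - q*u = 1 \<Longrightarrow> inv\<^bsub>SL2Z\<^esub> (M2 p q u v) = M2 v (-q) (-u) p"
  by (rule S.inv_equality) (simp_all add: SL2Z_mult SL2Z_one SL2Z_carrier algebra_simps)

lemma mem_G1: "M2 p q u v \<in> Gamma1 M \<longleftrightarrow>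
   p*v - q*u = 1 \<and> int M dvd u \<and> int M dvd (p - 1) \<and> int M dvd (v - 1)"
  by (auto simp: Gamma1_def cong_iff_dvd_diff)

lemma mem_G0: "M2 p q u v \<in> Gamma0 M \<longleftrightarrow> p*v - q*u = 1 \<and> int M dvd u"
  by (auto simp: Gamma0_def cong_iff_dvd_diff)

lemma mem_Gup: "M2 p q u v \<in> Gamma_up0_2 \<longleftrightarrow> p*v - q*u = 1 \<and> 2 dvd q"
  by (auto simp: Gamma_up0_2_def cong_iff_dvd_diff)


lemma ar1:
  fixes m p a c q :: int
  assumes h: "m dvd p - 1" "m dvd a - 1" "m dvd c"
  shows "m dvd p * a + q * c - 1"
proof -
  have e: "p * a + q * c - 1 = (p - 1) * a + (a - 1) + q * c" by (simp add: algebra_simps)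
  show ?thesis unfolding e by (rule dvd_add[OF dvd_add[OF dvd_mult2[OF h(1)] h(2)] dvd_mult[OF h(3)]])
qed

lemma ar2:
  fixes m u a v c :: int
  assumes "m dvd u" "m dvd c"
  shows "m dvd u * a + v * c"
  by (rule dvd_add[OF dvd_mult2[OF assms(1)] dvd_mult[OF assms(2)]])

lemma ar3:
  fixes m u b v d :: int
  assumes h: "m dvd u" "m dvd v - 1" "m dvd d - 1"
  shows "m dvd u * b + v * d - 1"
proof -
  have e: "u * b + v * d - 1 = u * b + (v - 1) * d + (d - 1)" by (simp add: algebra_simps)
  show ?thesis unfolding e by (rule dvd_add[OF dvd_add[OF dvd_mult2[OF h(1)] dvd_mult2[OF h(2)]] h(3)])
qed

lemma det1: "p* v - q* u = (1::int) \<Longrightarrow> a* d - b* c = 1 \<Longrightarrow>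
   (p* a + q* c) * (u* b + v* d) - (p* b + q* d) * (u* a + v* c) = 1"
proof -
  assume "p* v - q* u = (1::int)" "a* d - b* c = 1"
  moreover have "(p* a + q* c) * (u* b + v* d) - (p* b + q* d) * (u* a + v* c) = (p* v - q* u) * (a* d - b* c)"
    by (simp add: algebra_simps)
  ultimately show ?thesis by simp
qed

lemma sub_G1: "subgroup (Gamma1 M) SL2Z"
proof (rule S.subgroupI)
  show "Gamma1 M \<subseteq> carrier SL2Z" by (auto simp: Gamma1_def SL2Z_carrier)
  show "Gamma1 M \<noteq> {}" using mem_G1[of 1 0 0 1 M] by auto
  fix x y assume x: "x \<in> Gamma1 M" and y: "y \<in> Gamma1 M"
  obtain p q u v where ex: "x = M2 p q u v" by (cases x)
  obtain a b c d where ey: "y = M2 a b c d" by (cases y)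
  have dx: "p * v - q * u = 1" using x unfolding ex mem_G1 by simp
  show "inv\<^bsub>SL2Z\<^esub> x \<in> Gamma1 M"
    using x unfolding ex SL2Z_inv[OF dx] mem_G1 by (simp add: algebra_simps dvd_diff_commute)
  show "x \<otimes>\<^bsub>SL2Z\<^esub> y \<in> Gamma1 M"
    using x y unfolding ex ey by (simp add: mem_G1 SL2Z_mult ar1 ar2 ar3 det1)
qed

lemma sub_G0: "subgroup (Gamma0 M) SL2Z"
proof (rule S.subgroupI)
  show "Gamma0 M \<subseteq> carrier SL2Z" by (auto simp: Gamma0_def SL2Z_carrier)
  show "Gamma0 M \<noteq> {}" using mem_G0[of 1 0 0 1 M] by auto
  fix x y assume x: "x \<in> Gamma0 M" and y: "y \<in> Gamma0 M"
  obtain p q u v where ex: "x = M2 p q u v" by (cases x)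
  obtain a b c d where ey: "y = M2 a b c d" by (cases y)
  have dx: "p * v - q * u = 1" using x unfolding ex mem_G0 by simp
  show "inv\<^bsub>SL2Z\<^esub> x \<in> Gamma0 M"
    using x unfolding ex SL2Z_inv[OF dx] mem_G0 by (simp add: algebra_simps)
  show "x \<otimes>\<^bsub>SL2Z\<^esub> y \<in> Gamma0 M"
    using x y unfolding ex ey by (simp add: mem_G0 SL2Z_mult ar2 det1)
qed

lemma sub_Gup: "subgroup Gamma_up0_2 SL2Z"
proof (rule S.subgroupI)
  show "Gamma_up0_2 \<subseteq> carrier SL2Z" by (auto simp: Gamma_up0_2_def SL2Z_carrier)
  show "Gamma_up0_2 \<noteq> {}" using mem_Gup[of 1 0 0 1] by auto
  fix x y assume x: "x \<in> Gamma_up0_2" and y: "y \<in> Gamma_up0_2"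
  obtain p q u v where ex: "x = M2 p q u v" by (cases x)
  obtain a b c d where ey: "y = M2 a b c d" by (cases y)
  have dx: "p * v - q * u = 1" using x unfolding ex mem_Gup by simp
  show "inv\<^bsub>SL2Z\<^esub> x \<in> Gamma_up0_2"
    using x unfolding ex SL2Z_inv[OF dx] mem_Gup by (simp add: algebra_simps)
  show "x \<otimes>\<^bsub>SL2Z\<^esub> y \<in> Gamma_up0_2"
    using x y unfolding ex ey by (simp add: mem_Gup SL2Z_mult det1)
qed

lemma sub_Phi: "subgroup (Phi N r s) SL2Z"
  unfolding Phi_def by (rule S.subgroups_Inter_pair[OF sub_G1 sub_G0])

lemma sub_int: "subgroup A SL2Z \<Longrightarrow> subgroup (A \<inter> Gamma_up0_2) SL2Z"
  by (rule S.subgroups_Inter_pair[OF _ sub_Gup])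


lemma pc_arith:
  fixes M a b c d a' b' c' d' :: int
  assumes h: "M dvd a - a'" "M dvd b - b'" "M dvd c - c'" "M dvd d - d'" and det: "a' * d' - b' * c' = 1"
  shows "M dvd a * d' + b * (- c') - 1" "M dvd a * (- b') + b * a'"
    "M dvd c * d' + d * (- c')" "M dvd c * (- b') + d * a' - 1"
proof -
  have e1: "a * d' + b * (- c') - 1 = (a - a') * d' - (b - b') * c' + (a' * d' - b' * c' - 1)"
    by (simp add: algebra_simps)
  show "M dvd a * d' + b * (- c') - 1" unfolding e1 det
    by (simp add: dvd_diff[OF dvd_mult2[OF h(1)] dvd_mult2[OF h(2)]])
  have e2: "a * (- b') + b * a' = (b - b') * a' - (a - a') * b'" by (simp add: algebra_simps)
  show "M dvd a * (- b') + b * a'" unfolding e2 by (rule dvd_diff[OF dvd_mult2[OF h(2)] dvd_mult2[OF h(1)]])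
  have e3: "c * d' + d * (- c') = (c - c') * d' - (d - d') * c'" by (simp add: algebra_simps)
  show "M dvd c * d' + d * (- c')" unfolding e3 by (rule dvd_diff[OF dvd_mult2[OF h(3)] dvd_mult2[OF h(4)]])
  have e4: "c * (- b') + d * a' - 1 = (d - d') * a' - (c - c') * b' + (a' * d' - b' * c' - 1)"
    by (simp add: algebra_simps)
  show "M dvd c * (- b') + d * a' - 1" unfolding e4 det
    by (simp add: dvd_diff[OF dvd_mult2[OF h(4)] dvd_mult2[OF h(3)]])
qed

definition PC :: "int \<Rightarrow> m2 \<Rightarrow> bool" where
  "PC M x = (case x of M2 p q u v \<Rightarrow> p * v - q * u = 1 \<and> M dvd p - 1 \<and> M dvd q \<and> M dvd u \<and> M dvd v - 1)"

definition fm :: "int \<Rightarrow> m2 \<Rightarrow> int \<times> int \<times> int \<times> int" where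
  "fm M x = (case x of M2 p q u v \<Rightarrow> (p mod M, q mod M, u mod M, v mod M))"

lemma fm_PC:
  assumes x: "x \<in> carrier SL2Z" and y: "y \<in> carrier SL2Z" and e: "fm M x = fm M y"
  shows "PC M (x \<otimes>\<^bsub>SL2Z\<^esub> inv\<^bsub>SL2Z\<^esub> y)"
proof -
  obtain a b c d where ex: "x = M2 a b c d" by (cases x)
  obtain a' b' c' d' where ey: "y = M2 a' b' c' d'" by (cases y)
  have dx: "a * d - b * c = 1" using x ex by (simp add: SL2Z_carrier)
  have dy: "a' * d' - b' * c' = 1" using y ey by (simp add: SL2Z_carrier)
  have h: "M dvd a - a'" "M dvd b - b'" "M dvd c - c'" "M dvd d - d'"
    using e unfolding ex ey fm_def by (simp_all add: mod_eq_dvd_iff)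
  have "m2_det (m2_mult (M2 a b c d) (M2 d' (- b') (- c') a')) = 1"
    by (simp only: det_mult) (simp add: dx dy algebra_simps)
  thus ?thesis unfolding ex ey SL2Z_inv[OF dy] SL2Z_mult PC_def
    using pc_arith[OF h dy] by simp
qed

lemma fidx_crit:
  assumes Hx: "subgroup Hx SL2Z" and J: "subgroup J SL2Z" and M: "M > 0"
    and PCJ: "\<And>x. x \<in> carrier SL2Z \<Longrightarrow> PC M x \<Longrightarrow> x \<in> J"
  shows "fidx SL2Z Hx J"
proof -
  have Hc: "x \<in> carrier SL2Z" if "x \<in> Hx" for x using subgroup.subset[OF Hx] that by blast
  define rep where "rep v = (SOME h. h \<in> Hx \<and> fm M h = v)" for v
  have fin: "finite (fm M ` Hx)"
  proof (rule finite_subset)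
    show "fm M ` Hx \<subseteq> {0..<M} \<times> {0..<M} \<times> {0..<M} \<times> {0..<M}"
      using M by (auto simp: fm_def split: m2.splits)
  qed simp
  have "(\<lambda>h. J #>\<^bsub>SL2Z\<^esub> h) ` Hx \<subseteq> (\<lambda>v. J #>\<^bsub>SL2Z\<^esub> rep v) ` (fm M ` Hx)"
  proof
    fix C assume "C \<in> (\<lambda>h. J #>\<^bsub>SL2Z\<^esub> h) ` Hx"
    then obtain h where h: "h \<in> Hx" "C = J #>\<^bsub>SL2Z\<^esub> h" by blast
    have r: "rep (fm M h) \<in> Hx \<and> fm M (rep (fm M h)) = fm M h"
      unfolding rep_def by (rule someI[of _ h]) (use h in simp)
    have rc: "rep (fm M h) \<in> carrier SL2Z" using Hc r by blast
    have "PC M (h \<otimes>\<^bsub>SL2Z\<^esub> inv\<^bsub>SL2Z\<^esub> rep (fm M h))"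
      by (rule fm_PC[OF Hc[OF h(1)] rc]) (use r in simp)
    hence "h \<otimes>\<^bsub>SL2Z\<^esub> inv\<^bsub>SL2Z\<^esub> rep (fm M h) \<in> J"
      using PCJ rc Hc[OF h(1)] by simp
    hence "h \<in> J #>\<^bsub>SL2Z\<^esub> rep (fm M h)"
      by (rule subgroup.rcos_module_rev[OF J S.is_group rc Hc[OF h(1)]])
    hence "J #>\<^bsub>SL2Z\<^esub> rep (fm M h) = J #>\<^bsub>SL2Z\<^esub> h"
      by (rule S.repr_independence[OF _ rc J])
    thus "C \<in> (\<lambda>v. J #>\<^bsub>SL2Z\<^esub> rep v) ` (fm M ` Hx)" using h by blast
  qed
  thus ?thesis unfolding fidx_def using fin by (meson finite_imageI finite_subset)
qed


lemma cop: "odd N \<Longrightarrow> int N dvd x \<Longrightarrow> (2::int)^k dvd x \<Longrightarrow> int N * 2^k dvd x"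
  by (rule divides_mult) simp_all

lemma mem_Phi: "M2 p q u v \<in> Phi N r s \<longleftrightarrow> p * v - q * u = 1 \<and> int N * 2^s dvd u \<and>
   int N * 2^s dvd p - 1 \<and> int N * 2^s dvd v - 1 \<and> 2^r dvd u"
  by (auto simp: Phi_def mem_G1 mem_G0)

lemma mem_G1': "M2 p q u v \<in> Gamma1 (N * 2^r) \<longleftrightarrow> p * v - q * u = 1 \<and> int N * 2^r dvd u \<and>
   int N * 2^r dvd p - 1 \<and> int N * 2^r dvd v - 1"
  by (auto simp: mem_G1)

locale conc =
  fixes N r s :: nat
  assumes oN: "odd N" and s2: "2 \<le> s" and sr: "s \<le> r"
begin

abbreviation "HH \<equiv> Phi N r s"
abbreviation "KK \<equiv> Gamma1 (N * 2^r)"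
abbreviation "HP \<equiv> Phi N r s \<inter> Gamma_up0_2"
abbreviation "KP \<equiv> Gamma1 (N * 2^r) \<inter> Gamma_up0_2"

lemma dvNs: "int N * 2^s dvd int N * 2^r"
  by (rule mult_dvd_mono) (simp_all add: le_imp_power_dvd sr)

lemma KH: "KK \<subseteq> HH"
proof
  fix x assume x: "x \<in> KK"
  obtain p q u v where ex: "x = M2 p q u v" by (cases x)
  show "x \<in> HH" using x unfolding ex mem_Phi mem_G1'
    using dvd_trans[OF dvNs] dvd_trans[of "(2::int)^r" "int N * 2^r"] by auto
qed

lemma Phirr: "Phi N r r = KK"
proof
  show "Phi N r r \<subseteq> KK"
  proof
    fix x assume x: "x \<in> Phi N r r"
    obtain p q u v where ex: "x = M2 p q u v" by (cases x)
    show "x \<in> KK" using x unfolding ex mem_Phi mem_G1' by auto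
  qed
  show "KK \<subseteq> Phi N r r"
  proof
    fix x assume x: "x \<in> KK"
    obtain p q u v where ex: "x = M2 p q u v" by (cases x)
    show "x \<in> Phi N r r" using x unfolding ex mem_Phi mem_G1'
      using dvd_trans[of "(2::int)^r" "int N * 2^r"] by auto
  qed
qed

lemma sHH: "subgroup HH SL2Z" by (rule sub_Phi)
lemma sKK: "subgroup KK SL2Z" by (rule sub_G1)
lemma sHP: "subgroup HP SL2Z" by (rule sub_int[OF sub_Phi])
lemma sKP: "subgroup KP SL2Z" by (rule sub_int[OF sub_G1])

lemma PC_KP: "x \<in> carrier SL2Z \<Longrightarrow> PC (int N * 2^(r+1)) x \<Longrightarrow> x \<in> KP"
proof -
  assume x: "x \<in> carrier SL2Z" and pc: "PC (int N * 2^(r+1)) x"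
  obtain p q u v where ex: "x = M2 p q u v" by (cases x)
  have d1: "int N * 2^r dvd int N * 2^(r+1)" by simp
  have d2: "(2::int) dvd int N * 2^(r+1)" by simp
  show ?thesis using pc unfolding ex PC_def
    using dvd_trans[OF d1, of u] dvd_trans[OF d1, of "p - 1"] dvd_trans[OF d1, of "v - 1"] dvd_trans[OF d2, of q]
    by (simp add: mem_G1' mem_Gup)
qed

lemma fidx_all:
  assumes A: "subgroup A SL2Z" and J: "subgroup J SL2Z" and KPJ: "KP \<subseteq> J"
  shows "fidx SL2Z A J"
  by (rule fidx_crit[OF A J, of "int N * 2^(r+1)"]) (use PC_KP KPJ oN in \<open>auto simp: odd_pos\<close>)


lemma cmult:
  assumes x: "x \<in> Gamma_up0_2" and y: "y \<in> Gamma_up0_2"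
  shows "conj_t (x \<otimes>\<^bsub>SL2Z\<^esub> y) = conj_t x \<otimes>\<^bsub>SL2Z\<^esub> conj_t y"
proof -
  obtain p q u v where ex: "x = M2 p q u v" by (cases x)
  obtain a b c d where ey: "y = M2 a b c d" by (cases y)
  obtain q' where q: "q = 2 * q'" using x unfolding ex mem_Gup by (auto elim: evenE)
  obtain b' where b: "b = 2 * b'" using y unfolding ey mem_Gup by (auto elim: evenE)
  have e: "p * (2 * b') + 2 * q' * d = 2 * (p * b' + q' * d)" by (simp add: algebra_simps)
  show ?thesis unfolding ex ey q b SL2Z_mult by (simp add: e algebra_simps)
qed

lemma cH: "x \<in> HP \<Longrightarrow> conj_t x \<in> HH"
proof -
  assume x: "x \<in> HP"
  obtain p q u v where ex: "x = M2 p q u v" by (cases x)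
  have "2 dvd q" using x unfolding ex by (simp add: mem_Gup)
  then obtain q' where q: "q = 2 * q'" by (rule dvdE)
  show ?thesis using x unfolding ex q by (simp add: mem_Phi algebra_simps)
qed

lemma HP_u: "M2 p q u v \<in> HP \<Longrightarrow> int N * 2^r dvd u"
proof -
  assume x: "M2 p q u v \<in> HP"
  have "int N * 2^s dvd u" using x by (simp add: mem_Phi)
  hence "int N dvd u" by (rule dvd_trans[rotated]) simp
  moreover have "(2::int)^r dvd u" using x by (simp add: mem_Phi)
  ultimately show ?thesis by (rule cop[OF oN])
qed

lemma cK: "x \<in> HP \<Longrightarrow> conj_t x \<in> KK \<longleftrightarrow> x \<in> KP"
proof -
  assume x: "x \<in> HP"
  obtain p q u v where ex: "x = M2 p q u v" by (cases x)
  have "2 dvd q" using x unfolding ex by (simp add: mem_Gup)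
  then obtain q' where q: "q = 2 * q'" by (rule dvdE)
  have u: "int N * 2^r dvd u" using HP_u x unfolding ex by blast
  have d: "p * v - q * u = 1" using x unfolding ex by (simp add: mem_Phi)
  have ua: "int N * 2^r dvd u * 2" "int N * 2^r dvd 2 * u" using u by simp_all
  show ?thesis using u d ua by (auto simp: ex q mem_G1' mem_Gup algebra_simps)
qed

lemma prod:
  assumes h: "h \<in> HH"
  shows "\<exists>k\<in>KK. \<exists>x\<in>HP. h = k \<otimes>\<^bsub>SL2Z\<^esub> conj_t x"
proof -
  obtain a b c d where eh: "h = M2 a b c d" by (cases h)
  have hh: "a * d - b * c = 1" "int N * 2^s dvd c" "int N * 2^s dvd a - 1" "int N * 2^s dvd d - 1" "2^r dvd c"
    using h unfolding eh mem_Phi by auto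
  obtain c0 where c0: "c = 2^r * c0" using hh(5) by (auto elim: dvdE)
  have "int N dvd c" using hh(2) by (rule dvd_trans[rotated]) simp
  hence "int N dvd c0 * 2^r" unfolding c0 by (simp add: mult.commute)
  hence Nc0: "int N dvd c0" using coprime_dvd_mult_left_iff[of "int N" "2^r" c0] oN by simp
  have "(2::int) dvd int N * 2^s" using s2 by (simp add: dvd_mult power_eq_if)
  hence "2 dvd a - 1" using hh(3) by (rule dvd_trans)
  hence "odd a" by (simp add: even_iff_mod_2_eq_zero) presburger
  hence "even (int N * a + 1)" using oN by simp
  then obtain e where e: "int N * a + 1 = 2 * e" by (rule dvdE)
  define m where "m = int N * 2^r * c0"
  define u' where "u' = 2^r * c0 * e"
  define x where "x = M2 a (2 * b) u' (m * b + d)"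
  have mu: "2 * u' = m * a + c" unfolding u'_def m_def c0
  proof -
    have "2 * (2^r * c0 * e) = 2^r * c0 * (2 * e)" by (simp add: algebra_simps)
    also have "\<dots> = 2^r * c0 * (int N * a + 1)" by (simp add: e)
    finally show "2 * (2^r * c0 * e) = int N * 2^r * c0 * a + 2^r * c0" by (simp add: algebra_simps)
  qed
  have cx: "conj_t x = M2 a b (m * a + c) (m * b + d)" unfolding x_def by (simp add: mu[symmetric])
  have mK: "int N * 2^r dvd m" unfolding m_def by simp
  have ms: "int N * 2^s dvd m" using dvd_trans[OF dvNs mK] .
  have kK: "M2 1 0 (- m) 1 \<in> KK" unfolding mem_G1' using mK by simp
  have hx: "h = M2 1 0 (- m) 1 \<otimes>\<^bsub>SL2Z\<^esub> conj_t x" unfolding cx eh SL2Z_mult by simp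
  have xdet: "a * (m * b + d) - 2 * b * u' = 1"
  proof -
    have "a * (m * b + d) - 2 * b * u' = a * (m * b + d) - b * (2 * u')" by (simp add: algebra_simps)
    also have "\<dots> = a * d - b * c" unfolding mu by (simp add: algebra_simps)
    finally show ?thesis using hh(1) by simp
  qed
  have u1: "int N * 2^s dvd u'"
  proof -
    have "int N * 2^s dvd c0 * 2^r" by (rule mult_dvd_mono[OF Nc0]) (simp add: le_imp_power_dvd sr)
    from dvd_mult2[OF this, of e] show ?thesis unfolding u'_def by (simp add: ac_simps)
  qed
  have u2: "(2::int)^r dvd u'" unfolding u'_def by simp
  have v1: "int N * 2^s dvd m * b + d - 1"
  proof -
    have e: "m * b + d - 1 = m * b + (d - 1)" by simp
    show ?thesis unfolding e by (rule dvd_add[OF dvd_mult2[OF ms] hh(4)])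
  qed
  have xHP: "x \<in> HP" unfolding x_def mem_Phi mem_Gup Int_iff using xdet u1 u2 hh(3) v1
    by (simp add: algebra_simps)
  show ?thesis using kK xHP hx by blast
qed


lemma HPH: "HP \<subseteq> HH" by blast
lemma KPHP: "KP \<subseteq> HP" using KH by blast
lemma KPK: "KP \<subseteq> KK" by blast

lemma conj_one: "conj_t \<one>\<^bsub>SL2Z\<^esub> = \<one>\<^bsub>SL2Z\<^esub>" by (simp add: SL2Z_one)

lemma T1: "trans3 SL2Z HH HP KP"
  by (rule trans3.intro[OF SL2Z_group trans3_axioms.intro[OF sHH sHP sKP HPH KPHP
      fidx_all[OF sHH sHP KPHP] fidx_all[OF sHP sKP subset_refl] fidx_all[OF sHH sKP subset_refl]]])

lemma T2: "trans3 SL2Z HH KK KP"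
  by (rule trans3.intro[OF SL2Z_group trans3_axioms.intro[OF sHH sKK sKP KH KPK
      fidx_all[OF sHH sKK KPK] fidx_all[OF sKK sKP subset_refl] fidx_all[OF sHH sKP subset_refl]]])

lemma M1: "mack SL2Z HH KK HP KP conj_t"
proof (rule mack.intro[OF SL2Z_group], rule mack_axioms.intro)
  show "subgroup HH SL2Z" "subgroup KK SL2Z" "KK \<subseteq> HH" "subgroup HP SL2Z" "subgroup KP SL2Z" "KP \<subseteq> HP"
    by (rule sHH sKK KH sHP sKP KPHP)+
  show "fidx SL2Z HH KK" by (rule fidx_all[OF sHH sKK KPK])
  show "fidx SL2Z HP KP" by (rule fidx_all[OF sHP sKP subset_refl])
  show "\<And>x y. x \<in> HP \<Longrightarrow> y \<in> HP \<Longrightarrow> conj_t (x \<otimes>\<^bsub>SL2Z\<^esub> y) = conj_t x \<otimes>\<^bsub>SL2Z\<^esub> conj_t y"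
    using cmult by blast
  show "\<And>x. x \<in> HP \<Longrightarrow> conj_t x \<in> HH" by (rule cH)
  show "\<And>x. x \<in> HP \<Longrightarrow> (conj_t x \<in> KK) = (x \<in> KP)" by (rule cK)
  show "\<And>h. h \<in> HH \<Longrightarrow> \<exists>k\<in>KK. \<exists>x\<in>HP. h = k \<otimes>\<^bsub>SL2Z\<^esub> conj_t x" by (rule prod)
qed

lemma M0: "mack SL2Z HH HH HP HP conj_t"
proof (rule mack.intro[OF SL2Z_group], rule mack_axioms.intro)
  show "subgroup HH SL2Z" "subgroup HH SL2Z" "subgroup HP SL2Z" "subgroup HP SL2Z" by (rule sHH sHP)+
  show "HH \<subseteq> HH" "HP \<subseteq> HP" by simp_all
  show "fidx SL2Z HH HH" by (rule fidx_all[OF sHH sHH]) (use KPHP in blast)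
  show "fidx SL2Z HP HP" by (rule fidx_all[OF sHP sHP KPHP])
  show "\<And>x y. x \<in> HP \<Longrightarrow> y \<in> HP \<Longrightarrow> conj_t (x \<otimes>\<^bsub>SL2Z\<^esub> y) = conj_t x \<otimes>\<^bsub>SL2Z\<^esub> conj_t y"
    using cmult by blast
  show "\<And>x. x \<in> HP \<Longrightarrow> conj_t x \<in> HH" by (rule cH)
  show "\<And>x. x \<in> HP \<Longrightarrow> (conj_t x \<in> HH) = (x \<in> HP)" using cH by blast
  fix h assume h: "h \<in> HH"
  have "\<one>\<^bsub>SL2Z\<^esub> \<in> HP" by (rule subgroup.one_closed[OF sHP])
  moreover have "h = h \<otimes>\<^bsub>SL2Z\<^esub> conj_t \<one>\<^bsub>SL2Z\<^esub>"
    unfolding conj_one using h subgroup.subset[OF sHH] by auto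
  ultimately show "\<exists>k\<in>HH. \<exists>x\<in>HP. h = k \<otimes>\<^bsub>SL2Z\<^esub> conj_t x" using h by blast
qed

end

lemma transfer_eq: "transfer H K Cl = TrC SL2Z H K Cl"
  unfolding transfer_def TrC_def Tr_def phi_def nx_def rtv_def right_transversal_def ab_def abG_def Let_def
  by (simp add: SL2Z_mult)


theorem lemma3p6:
  fixes N r s :: nat
  assumes "odd N" and "N > 0" and "2 \<le> s" and "s \<le> r"
  shows "\<forall>Cl \<in> carrier (ab (Phi N r s)).
           transfer (Phi N r s) (Gamma1 (N * 2^r)) (atkin N r s Cl)
         = atkin N r r (transfer (Phi N r s) (Gamma1 (N * 2^r)) Cl)"
proof
  interpret C: conc N r s using assms by unfold_locales
  interpret T1: trans3 SL2Z C.HH C.HP C.KP by (rule C.T1)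
  interpret T2: trans3 SL2Z C.HH C.KK C.KP by (rule C.T2)
  interpret M1: mack SL2Z C.HH C.KK C.HP C.KP conj_t by (rule C.M1)
  interpret M0: mack SL2Z C.HH C.HH C.HP C.HP conj_t by (rule C.M0)
  fix Cl assume "Cl \<in> carrier (ab (Phi N r s))"
  then obtain h0 where h0: "h0 \<in> C.HH" "Cl = derived SL2Z C.HH #>\<^bsub>SL2Z\<^esub> h0"
    unfolding ab_def abG_def[symmetric] using S.ab_carrier[OF C.sHH] by auto
  have Y: "transfer C.HH C.HP Cl = Tr SL2Z C.HH C.HP h0"
    unfolding transfer_eq h0(2) by (rule T1.HK.TrC_eq[OF h0(1)])
  obtain y where y: "y \<in> C.HP" "Tr SL2Z C.HH C.HP h0 = derived SL2Z C.HP #>\<^bsub>SL2Z\<^esub> y"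
    using T1.HK.Tr_closed[OF h0(1)] S.ab_carrier[OF C.sHP] by auto
  have cy: "conj_t y \<in> C.HH" by (rule C.cH[OF y(1)])
  have A1: "atkin N r s Cl = derived SL2Z C.HH #>\<^bsub>SL2Z\<^esub> conj_t y"
    unfolding atkin_def ab_incl_def Y y(2) M0.psi_cos[OF y(1), symmetric] M0.psi_def ..
  have "transfer C.HH C.KK (atkin N r s Cl) = Tr SL2Z C.HH C.KK (conj_t y)"
    unfolding transfer_eq A1 by (rule T2.HK.TrC_eq[OF cy])
  also have "\<dots> = M1.psi (Tr SL2Z C.HP C.KP y)" by (rule M1.Tr_conj[OF y(1)])
  also have "Tr SL2Z C.HP C.KP y = TrC SL2Z C.HP C.KP (Tr SL2Z C.HH C.HP h0)"
    unfolding y(2) by (rule T1.KJ.TrC_eq[OF y(1), symmetric])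
  also have "\<dots> = Tr SL2Z C.HH C.KP h0" by (rule T1.Tr_trans[OF h0(1), symmetric])
  finally have L: "transfer C.HH C.KK (atkin N r s Cl) = M1.psi (Tr SL2Z C.HH C.KP h0)" .
  have Z: "TrC SL2Z C.HH C.KK Cl = Tr SL2Z C.HH C.KK h0"
    unfolding h0(2) by (rule T2.HK.TrC_eq[OF h0(1)])
  have "atkin N r r (transfer C.HH C.KK Cl) = M1.psi (TrC SL2Z C.KK C.KP (Tr SL2Z C.HH C.KK h0))"
    unfolding atkin_def ab_incl_def C.Phirr transfer_eq Z M1.psi_def ..
  also have "\<dots> = M1.psi (Tr SL2Z C.HH C.KP h0)" by (simp add: T2.Tr_trans[OF h0(1)])
  finally show "transfer C.HH C.KK (atkin N r s Cl) = atkin N r r (transfer C.HH C.KK Cl)"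
    using L by simp
qed

end
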